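(* Let $X$ be a Fréchet space and let $(T(t))_{t\geqslant0}$ be an exponentially equicontinuous $C_0$-semigroup on $X$ with generator $(A,D(A))$. Then \[-\infty\leqslant \operatorname{s}(A)\leqslant\omega_0(T)<+\infty.\]
   Context: A Fréchet space is a complete metrizable locally convex space; $\operatorname{cs}(X)$ denotes its continuous seminorms, a fundamental system is a subset $\Gamma\subseteq\operatorname{cs}(X)$ generating the topology, and $L(X)$ is the space of continuous linear maps $X\to X$. A set of operators in $L(X)$ is equicontinuous if for every continuous seminorm $q$ there exist a continuous seminorm $p$ and $C\geqslant0$ with $q(Sx)\leqslant Cp(x)$ for all operators $S$ in the set and all $x\in X$. A $C_0$-semigroup is a family $(T(t))_{t\geqslant0}\subseteq L(X)$ with $T(0)=\mathrm{id}_X$, $T(t+s)=T(t)T(s)$ for all $t,s\geqslant0$, and $t\mapsto T(t)x$ continuous on $[0,\infty)$ for every $x\in X$. It is exponentially equicontinuous of order $\omega\in\mathbb{R}$ if $\{e^{-\omega t}T(t)\}_{t\geqslant0}$ is equicontinuous, and exponentially equicontinuous if this holds for some $\omega\in\mathbb{R}$. The growth bound $\omega_0(T)$ is the infimum of all $\omega\in\mathbb{R}$ such that $\{e^{-\omega t}T(t)\}_{t\geqslant0}$ is equicontinuous. The generator is $Ax=\lim_{t\searrow0}\frac{T(t)x-x}{t}$ on $D(A)=\{x\in X: \lim_{t\searrow0}\frac{T(t)x-x}{t}\text{ exists}\}$. Let $L(X)_0$ denote the set of $B\in L(X)$ for which there is $\mu\in\mathbb{C}\setminus\{0\}$ such that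 $\{(\mu B)^n\}_{n\in\mathbb{N}_0}$ is equicontinuous (equivalently, bounded in the topology of uniform convergence on bounded sets). For a linear operator $A\colon D(A)\to X$ with $D(A)\subseteq X$ a linear subspace, put $\delta_A=\{\infty\}$ if $D(A)=X$ and $A\in L(X)_0$, and $\delta_A=\varnothing$ otherwise. The resolvent set is $\rho(A)=\{\lambda\in\mathbb{C}: \lambda-A\colon D(A)\to X\text{ is bijective and }R(\lambda,A)=(\lambda-A)^{-1}\in L(X)_0\}\cup\delta_A$, the spectrum is $\sigma(A)=(\mathbb{C}\cup\{\infty\})\setminus\rho(A)$, and the spectral bound is $\operatorname{s}(A)=\sup\{\operatorname{Re}\lambda:\lambda\in\sigma(A)\cap\mathbb{C}\}$ (with $\sup\varnothing=-\infty$). *)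

theory Defs
  imports "HOL-Analysis.Analysis"
begin

class cvector = ab_group_add +
  fixes scaleC :: "complex \<Rightarrow> 'a \<Rightarrow> 'a" (infixr "*\<^sub>C" 75)
  assumes scaleC_add_right: "a *\<^sub>C (x + y) = a *\<^sub>C x + a *\<^sub>C y"
    and scaleC_add_left: "(a + b) *\<^sub>C x = a *\<^sub>C x + b *\<^sub>C x"
    and scaleC_scaleC: "a *\<^sub>C (b *\<^sub>C x) = (a * b) *\<^sub>C x"
    and scaleC_one: "1 *\<^sub>C x = x"

definition clinear_map :: "('a::cvector \<Rightarrow> 'a) \<Rightarrow> bool" where
  "clinear_map T \<longleftrightarrow> (\<forall>x y. T (x + y) = T x + T y) \<and> (\<forall>c x. T (c *\<^sub>C x) = c *\<^sub>C T x)"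

definition seminorm :: "('a::cvector \<Rightarrow> real) \<Rightarrow> bool" where
  "seminorm p \<longleftrightarrow> (\<forall>x y. p (x + y) \<le> p x + p y) \<and> (\<forall>c x. p (c *\<^sub>C x) = cmod c * p x)"

definition seminorm_topology :: "(nat \<Rightarrow> 'a::cvector \<Rightarrow> real) \<Rightarrow> 'a topology" where
  "seminorm_topology P = topology (\<lambda>U. \<forall>x\<in>U. \<exists>m. \<exists>e>0.
      {y. (\<Sum>k\<le>m. P k (y - x)) < e} \<subseteq> U)"

definition frechet :: "(nat \<Rightarrow> 'a::cvector \<Rightarrow> real) \<Rightarrow> bool" where
  "frechet P \<longleftrightarrow> (\<forall>n. seminorm (P n))
     \<and> (\<forall>x. (\<forall>n. P n x = 0) \<longrightarrow> x = 0)
     \<and> (\<forall>f :: nat \<Rightarrow> 'a. (\<forall>n. \<forall>e>0. \<exists>N. \<forall>k\<ge>N. \<forall>l\<ge>N. P n (f k - f l) < e)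
            \<longrightarrow> (\<exists>y. limitin (seminorm_topology P) f y sequentially))"

definition cont_seminorms :: "(nat \<Rightarrow> 'a::cvector \<Rightarrow> real) \<Rightarrow> ('a \<Rightarrow> real) set" where
  "cont_seminorms P = {q. seminorm q \<and> continuous_map (seminorm_topology P) euclideanreal q}"

definition cont_ops :: "(nat \<Rightarrow> 'a::cvector \<Rightarrow> real) \<Rightarrow> ('a \<Rightarrow> 'a) set" where
  "cont_ops P = {T. clinear_map T \<and>
      continuous_map (seminorm_topology P) (seminorm_topology P) T}"

definition equicontinuous :: "(nat \<Rightarrow> 'a::cvector \<Rightarrow> real) \<Rightarrow> ('a \<Rightarrow> 'a) set \<Rightarrow> bool" where
  "equicontinuous P S \<longleftrightarrow> S \<subseteq> cont_ops P \<and>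
     (\<forall>q\<in>cont_seminorms P. \<exists>p\<in>cont_seminorms P. \<exists>C\<ge>0.
        \<forall>B\<in>S. \<forall>x. q (B x) \<le> C * p x)"

definition C0_semigroup :: "(nat \<Rightarrow> 'a::cvector \<Rightarrow> real) \<Rightarrow> (real \<Rightarrow> 'a \<Rightarrow> 'a) \<Rightarrow> bool" where
  "C0_semigroup P T \<longleftrightarrow> (\<forall>t\<ge>0. T t \<in> cont_ops P) \<and> T 0 = id
     \<and> (\<forall>t\<ge>0. \<forall>s\<ge>0. T (t + s) = T t \<circ> T s)
     \<and> (\<forall>x. continuous_map (top_of_set {0..}) (seminorm_topology P) (\<lambda>t. T t x))"

definition exp_equicont_order :: "(nat \<Rightarrow> 'a::cvector \<Rightarrow> real) \<Rightarrow> (real \<Rightarrow> 'a \<Rightarrow> 'a) \<Rightarrow> real \<Rightarrow> bool" where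
  "exp_equicont_order P T \<omega> \<longleftrightarrow>
     equicontinuous P ((\<lambda>t x. complex_of_real (exp (- \<omega> * t)) *\<^sub>C T t x) ` {0..})"

definition exp_equicont :: "(nat \<Rightarrow> 'a::cvector \<Rightarrow> real) \<Rightarrow> (real \<Rightarrow> 'a \<Rightarrow> 'a) \<Rightarrow> bool" where
  "exp_equicont P T \<longleftrightarrow> (\<exists>\<omega>. exp_equicont_order P T \<omega>)"

text \<open>Growth bound, as an extended real (Inf of the empty set is +infinity)\<close>
definition growth_bound :: "(nat \<Rightarrow> 'a::cvector \<Rightarrow> real) \<Rightarrow> (real \<Rightarrow> 'a \<Rightarrow> 'a) \<Rightarrow> ereal" where
  "growth_bound P T = (INF \<omega>\<in>{\<omega>. exp_equicont_order P T \<omega>}. ereal \<omega>)"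

definition is_generator :: "(nat \<Rightarrow> 'a::cvector \<Rightarrow> real) \<Rightarrow> (real \<Rightarrow> 'a \<Rightarrow> 'a)
    \<Rightarrow> ('a \<Rightarrow> 'a) \<Rightarrow> 'a set \<Rightarrow> bool" where
  "is_generator P T A D \<longleftrightarrow>
     D = {x. \<exists>y. limitin (seminorm_topology P)
                 (\<lambda>h. complex_of_real (1 / h) *\<^sub>C (T h x - x)) y (at_right 0)}
     \<and> (\<forall>x\<in>D. limitin (seminorm_topology P)
                 (\<lambda>h. complex_of_real (1 / h) *\<^sub>C (T h x - x)) (A x) (at_right 0))"

definition L0 :: "(nat \<Rightarrow> 'a::cvector \<Rightarrow> real) \<Rightarrow> ('a \<Rightarrow> 'a) set" where
  "L0 P = {B \<in> cont_ops P. \<exists>\<mu>. \<mu> \<noteq> 0 \<and>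
      equicontinuous P (range (\<lambda>n::nat. \<lambda>x. (\<mu> ^ n) *\<^sub>C (B ^^ n) x))}"

text \<open>Resolvent set as a subset of C \<union> {\<infinity>}, modelled by complex option
  (None = \<infinity>).\<close>
definition resolvent_set :: "(nat \<Rightarrow> 'a::cvector \<Rightarrow> real) \<Rightarrow> ('a \<Rightarrow> 'a) \<Rightarrow> 'a set
    \<Rightarrow> complex option set" where
  "resolvent_set P A D =
     Some ` {l. bij_betw (\<lambda>x. l *\<^sub>C x - A x) D UNIV
                \<and> inv_into D (\<lambda>x. l *\<^sub>C x - A x) \<in> L0 P}
     \<union> (if D = UNIV \<and> A \<in> L0 P then {None} else {})"

definition spectrum_op :: "(nat \<Rightarrow> 'a::cvector \<Rightarrow> real) \<Rightarrow> ('a \<Rightarrow> 'a) \<Rightarrow> 'a set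
    \<Rightarrow> complex option set" where
  "spectrum_op P A D = UNIV - resolvent_set P A D"

text \<open>Spectral bound (Sup of the empty set is -infinity)\<close>
definition spectral_bound :: "(nat \<Rightarrow> 'a::cvector \<Rightarrow> real) \<Rightarrow> ('a \<Rightarrow> 'a) \<Rightarrow> 'a set \<Rightarrow> ereal" where
  "spectral_bound P A D = (SUP l\<in>{l. Some l \<in> spectrum_op P A D}. ereal (Re l))"

end

theory Submission
  imports Defs
begin

lemma scaleC_zero_left[simp]: "0 *\<^sub>C (x::'a::cvector) = 0"
proof -
  have "0 *\<^sub>C x = 0 *\<^sub>C x + 0 *\<^sub>C x" using scaleC_add_left[of 0 0 x] by simp
  then show ?thesis by simp
qed

lemma scaleC_zero_right[simp]: "a *\<^sub>C (0::'a::cvector) = 0"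
proof -
  have "a *\<^sub>C (0::'a) = a *\<^sub>C 0 + a *\<^sub>C 0" using scaleC_add_right[of a 0 0] by simp
  then show ?thesis by simp
qed

lemma scaleC_minus_right: "a *\<^sub>C (- x::'a::cvector) = - (a *\<^sub>C x)"
proof -
  have "a *\<^sub>C x + a *\<^sub>C (-x) = 0" using scaleC_add_right[of a x "-x"] by simp
  from minus_unique[OF this] show ?thesis by simp
qed

lemma scaleC_minus_left: "(- a) *\<^sub>C (x::'a::cvector) = - (a *\<^sub>C x)"
proof -
  have "a *\<^sub>C x + (-a) *\<^sub>C x = 0" using scaleC_add_left[of a "-a" x] by simp
  from minus_unique[OF this] show ?thesis by simp
qed

lemma scaleC_diff_right: "a *\<^sub>C (x - y::'a::cvector) = a *\<^sub>C x - a *\<^sub>C y"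
  using scaleC_add_right[of a x "-y"] by (simp add: scaleC_minus_right)

lemma scaleC_diff_left: "(a - b) *\<^sub>C (x::'a::cvector) = a *\<^sub>C x - b *\<^sub>C x"
  using scaleC_add_left[of a "-b" x] by (simp add: scaleC_minus_left)

lemma scaleC_sum_right: "a *\<^sub>C (sum f A::'a::cvector) = (\<Sum>i\<in>A. a *\<^sub>C f i)"
  by (induction A rule: infinite_finite_induct) (auto simp: scaleC_add_right)

lemma scaleC_sum_left: "(sum f A) *\<^sub>C (x::'a::cvector) = (\<Sum>i\<in>A. f i *\<^sub>C x)"
  by (induction A rule: infinite_finite_induct) (auto simp: scaleC_add_left)

lemma clinear_add: "clinear_map T \<Longrightarrow> T (x + y) = T x + T y" by (simp add: clinear_map_def)
lemma clinear_scale: "clinear_map T \<Longrightarrow> T (c *\<^sub>C x) = c *\<^sub>C T x" by (simp add: clinear_map_def)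
lemma clinear_zero: "clinear_map T \<Longrightarrow> T 0 = 0"
  using clinear_scale[of T 0 0] by simp
lemma clinear_minus: "clinear_map T \<Longrightarrow> T (- x) = - T x"
proof -
  assume T: "clinear_map T"
  have "T x + T (-x) = 0" using clinear_add[OF T, of x "-x"] clinear_zero[OF T] by simp
  from minus_unique[OF this] show ?thesis by simp
qed
lemma clinear_diff: "clinear_map T \<Longrightarrow> T (x - y) = T x - T y"
  using clinear_add[of T x "-y"] by (simp add: clinear_minus)
lemma clinear_sum: "clinear_map T \<Longrightarrow> T (sum f A) = (\<Sum>i\<in>A. T (f i))"
  by (induction A rule: infinite_finite_induct) (auto simp: clinear_add clinear_zero)
lemma clinear_comp: "clinear_map S \<Longrightarrow> clinear_map T \<Longrightarrow> clinear_map (S \<circ> T)"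
  by (simp add: clinear_map_def)
lemma clinear_id: "clinear_map id" by (simp add: clinear_map_def)
lemma clinear_pow: "clinear_map T \<Longrightarrow> clinear_map (T ^^ n)"
  by (induction n) (auto simp: clinear_id clinear_comp)

lemma sn_add: "seminorm p \<Longrightarrow> p (x + y) \<le> p x + p y" by (simp add: seminorm_def)
lemma sn_scale: "seminorm p \<Longrightarrow> p (c *\<^sub>C x) = cmod c * p x" by (simp add: seminorm_def)
lemma sn_zero: "seminorm p \<Longrightarrow> p 0 = 0"
  using sn_scale[of p 0 0] by simp
lemma sn_minus: "seminorm p \<Longrightarrow> p (- x) = p x"
proof -
  assume p: "seminorm p"
  have "p (- x) = p ((-1) *\<^sub>C x)" by (simp add: scaleC_minus_left scaleC_one)
  also have "\<dots> = p x" using sn_scale[OF p] by simp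
  finally show ?thesis .
qed
lemma sn_nonneg: "seminorm p \<Longrightarrow> 0 \<le> p x"
proof -
  assume p: "seminorm p"
  have "p (x + - x) \<le> p x + p (- x)" by (rule sn_add[OF p])
  then show ?thesis using sn_zero[OF p] sn_minus[OF p] by simp
qed
lemma sn_diff: "seminorm p \<Longrightarrow> p (x - y) \<le> p x + p y"
  using sn_add[of p x "-y"] sn_minus[of p y] by simp
lemma sn_commute: "seminorm p \<Longrightarrow> p (x - y) = p (y - x)"
  using sn_minus[of p "y - x"] by simp
lemma sn_tri: "seminorm p \<Longrightarrow> p (x - z) \<le> p (x - y) + p (y - z)"
proof -
  assume p: "seminorm p"
  show ?thesis using sn_add[OF p, of "x - y" "y - z"] by simp
qed
lemma sn_sum: "seminorm p \<Longrightarrow> p (sum f A) \<le> (\<Sum>i\<in>A. p (f i))"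
proof (induction A rule: infinite_finite_induct)
  case (insert x F) then show ?case using sn_add[OF insert(4), of "f x" "sum f F"] by simp
qed (auto simp: sn_zero)
lemma sn_revtri: "seminorm p \<Longrightarrow> \<bar>p x - p y\<bar> \<le> p (x - y)"
proof -
  assume p: "seminorm p"
  have "p x \<le> p (x - y) + p y" using sn_add[OF p, of "x - y" y] by simp
  moreover have "p y \<le> p (x - y) + p x" using sn_add[OF p, of "y - x" x] sn_commute[OF p, of x y] by simp
  ultimately show ?thesis by linarith
qed


section \<open>Topology\<close>

definition Qs :: "(nat \<Rightarrow> 'a::cvector \<Rightarrow> real) \<Rightarrow> nat \<Rightarrow> 'a \<Rightarrow> real" where
  "Qs P m x = (\<Sum>k\<le>m. P k x)"

definition SN :: "(nat \<Rightarrow> 'a::cvector \<Rightarrow> real) \<Rightarrow> bool" where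
  "SN P \<longleftrightarrow> (\<forall>n. seminorm (P n))"

lemma SN_frechet: "frechet P \<Longrightarrow> SN P" by (simp add: frechet_def SN_def)

lemma Qs_seminorm: assumes "SN P" shows "seminorm (Qs P m)"
proof -
  have p: "\<And>n. seminorm (P n)" using assms by (simp add: SN_def)
  show ?thesis unfolding seminorm_def Qs_def
  proof (intro conjI allI)
    fix x y
    show "(\<Sum>k\<le>m. P k (x + y)) \<le> (\<Sum>k\<le>m. P k x) + (\<Sum>k\<le>m. P k y)"
      by (simp add: sum.distrib[symmetric] sum_mono sn_add[OF p])
  next
    fix c x
    show "(\<Sum>k\<le>m. P k (c *\<^sub>C x)) = cmod c * (\<Sum>k\<le>m. P k x)"
      by (simp add: sum_distrib_left sn_scale[OF p])
  qed
qed

lemma Qs_nonneg: "SN P \<Longrightarrow> 0 \<le> Qs P m x"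
  using Qs_seminorm sn_nonneg by blast

lemma Qs_ge: assumes "SN P" "k \<le> m" shows "P k x \<le> Qs P m x"
  unfolding Qs_def using assms unfolding SN_def
  by (intro member_le_sum) (auto intro: sn_nonneg)

lemma Qs_mono: assumes "SN P" "m \<le> M" shows "Qs P m x \<le> Qs P M x"
  unfolding Qs_def using assms unfolding SN_def
  by (intro sum_mono2) (auto intro: sn_nonneg)

lemma istop_sem: "SN P \<Longrightarrow> istopology (\<lambda>U. \<forall>x\<in>U. \<exists>m. \<exists>e>0. {y. Qs P m (y - x) < e} \<subseteq> U)"
  unfolding istopology_def
proof (intro conjI allI impI)
  fix S T assume SN: "SN P" and S: "\<forall>x\<in>S. \<exists>m. \<exists>e>0. {y. Qs P m (y - x) < e} \<subseteq> S"
    and T: "\<forall>x\<in>T. \<exists>m. \<exists>e>0. {y. Qs P m (y - x) < e} \<subseteq> T"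
  show "\<forall>x\<in>S \<inter> T. \<exists>m. \<exists>e>0. {y. Qs P m (y - x) < e} \<subseteq> S \<inter> T"
  proof
    fix x assume x: "x \<in> S \<inter> T"
    obtain m1 e1 where 1: "e1 > 0" "{y. Qs P m1 (y - x) < e1} \<subseteq> S"
      using bspec[OF S IntD1[OF x]] by blast
    obtain m2 e2 where 2: "e2 > 0" "{y. Qs P m2 (y - x) < e2} \<subseteq> T"
      using bspec[OF T IntD2[OF x]] by blast
    have "{y. Qs P (max m1 m2) (y - x) < min e1 e2} \<subseteq> S \<inter> T"
    proof
      fix y assume "y \<in> {y. Qs P (max m1 m2) (y - x) < min e1 e2}"
      then have a: "Qs P (max m1 m2) (y - x) < min e1 e2" by simp
      have b: "Qs P m1 (y - x) \<le> Qs P (max m1 m2) (y - x)" "Qs P m2 (y - x) \<le> Qs P (max m1 m2) (y - x)"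
        using Qs_mono[OF SN] by auto
      have "y \<in> S" using 1(2) a b(1) by (simp add: subset_iff)
      moreover have "y \<in> T" using 2(2) a b(2) by (simp add: subset_iff)
      ultimately show "y \<in> S \<inter> T" by simp
    qed
    moreover have "min e1 e2 > 0" using 1 2 by simp
    ultimately show "\<exists>m. \<exists>e>0. {y. Qs P m (y - x) < e} \<subseteq> S \<inter> T" by blast
  qed
next
  fix K assume K: "\<forall>S\<in>K. \<forall>x\<in>S. \<exists>m. \<exists>e>0. {y. Qs P m (y - x) < e} \<subseteq> S"
  show "\<forall>x\<in>\<Union> K. \<exists>m. \<exists>e>0. {y. Qs P m (y - x) < e} \<subseteq> \<Union> K"
  proof
    fix x assume "x \<in> \<Union>K"
    then obtain S where S: "S \<in> K" "x \<in> S" by blast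
    obtain m e where "e > 0" "{y. Qs P m (y - x) < e} \<subseteq> S" using bspec[OF bspec[OF K S(1)] S(2)] by blast
    then show "\<exists>m. \<exists>e>0. {y. Qs P m (y - x) < e} \<subseteq> \<Union> K" using S(1) by blast
  qed
qed

lemma openin_sem: "SN P \<Longrightarrow> openin (seminorm_topology P) U \<longleftrightarrow> (\<forall>x\<in>U. \<exists>m. \<exists>e>0. {y. Qs P m (y - x) < e} \<subseteq> U)"
proof -
  assume SN: "SN P"
  have "seminorm_topology P = topology (\<lambda>U. \<forall>x\<in>U. \<exists>m. \<exists>e>0. {y. Qs P m (y - x) < e} \<subseteq> U)"
    unfolding seminorm_topology_def Qs_def by simp
  then show ?thesis using topology_inverse'[OF istop_sem[OF SN]] by simp
qed

lemma topspace_sem[simp]: "SN P \<Longrightarrow> topspace (seminorm_topology P) = UNIV"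
proof -
  assume SN: "SN P"
  have "openin (seminorm_topology P) UNIV" using openin_sem[OF SN] by (auto intro: exI[of _ 0] exI[of _ 1])
  then show ?thesis by (simp add: openin_subset top.extremum_uniqueI)
qed

lemma ball_open: "SN P \<Longrightarrow> openin (seminorm_topology P) {y. Qs P m (y - x) < e}"
proof -
  assume SN: "SN P"
  show ?thesis unfolding openin_sem[OF SN]
  proof
    fix z assume "z \<in> {y. Qs P m (y - x) < e}"
    then have z: "Qs P m (z - x) < e" by simp
    have "{y. Qs P m (y - z) < e - Qs P m (z - x)} \<subseteq> {y. Qs P m (y - x) < e}"
    proof
      fix w assume "w \<in> {y. Qs P m (y - z) < e - Qs P m (z - x)}"
      then show "w \<in> {y. Qs P m (y - x) < e}"
        using sn_tri[OF Qs_seminorm[OF SN], of m w x z] by simp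
    qed
    then show "\<exists>m'. \<exists>e'>0. {y. Qs P m' (y - z) < e'} \<subseteq> {y. Qs P m (y - x) < e}"
      using z by (intro exI[of _ m] exI[of _ "e - Qs P m (z - x)"]) auto
  qed
qed

lemma lim_Qs: "SN P \<Longrightarrow> limitin (seminorm_topology P) f y F \<Longrightarrow> e > 0 \<Longrightarrow>
    eventually (\<lambda>i. Qs P m (f i - y) < e) F"
proof -
  assume SN: "SN P" and l: "limitin (seminorm_topology P) f y F" and e: "e > 0"
  have "y \<in> {z. Qs P m (z - y) < e}" using e sn_zero[OF Qs_seminorm[OF SN]] by simp
  then show ?thesis using l ball_open[OF SN, of m y e] unfolding limitin_def by auto
qed

lemma limitin_sem: "SN P \<Longrightarrow> limitin (seminorm_topology P) f y F \<longleftrightarrow>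
    (\<forall>n e. e > 0 \<longrightarrow> eventually (\<lambda>i. P n (f i - y) < e) F)"
proof
  assume SN: "SN P" and l: "limitin (seminorm_topology P) f y F"
  show "\<forall>n e. e > 0 \<longrightarrow> eventually (\<lambda>i. P n (f i - y) < e) F"
  proof (intro allI impI)
    fix n and e :: real assume "e > 0"
    from lim_Qs[OF SN l this, of n] show "eventually (\<lambda>i. P n (f i - y) < e) F"
      by (rule eventually_mono) (meson Qs_ge[OF SN order_refl] le_less_trans)
  qed
next
  assume SN: "SN P" and H: "\<forall>n e. e > 0 \<longrightarrow> eventually (\<lambda>i. P n (f i - y) < e) F"
  show "limitin (seminorm_topology P) f y F"
    unfolding limitin_def
  proof (intro conjI allI impI)
    show "y \<in> topspace (seminorm_topology P)" using SN by simp
    fix U assume "openin (seminorm_topology P) U \<and> y \<in> U"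
    then obtain m e where e: "e > 0" and U: "{z. Qs P m (z - y) < e} \<subseteq> U"
      using openin_sem[OF SN] by blast
    have "eventually (\<lambda>i. \<forall>k\<in>{..m}. P k (f i - y) < e / (m + 1)) F"
      using H e by (intro eventually_ball_finite) auto
    then show "eventually (\<lambda>i. f i \<in> U) F"
    proof (rule eventually_mono)
      fix i assume "\<forall>k\<in>{..m}. P k (f i - y) < e / (m + 1)"
      then have "(\<Sum>k\<le>m. P k (f i - y)) < (\<Sum>k\<le>m. e / (m + 1))"
        by (intro sum_strict_mono) auto
      then have "Qs P m (f i - y) < e" by (simp add: Qs_def)
      then show "f i \<in> U" using U by auto
    qed
  qed
qed


lemma open_lt1: "openin euclideanreal {..<(1::real)}"
  using open_lessThan open_openin by blast

lemma cs_bound: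
  assumes SN: "SN P" and q: "q \<in> cont_seminorms P"
  shows "\<exists>m c. c \<ge> 0 \<and> (\<forall>x. q x \<le> c * Qs P m x)"
proof -
  have sq: "seminorm q" and cq: "continuous_map (seminorm_topology P) euclideanreal q"
    using q by (auto simp: cont_seminorms_def)
  have "openin (seminorm_topology P) {x \<in> topspace (seminorm_topology P). q x \<in> {..<1}}"
    using cq open_lt1 unfolding continuous_map_def by blast
  then have op: "openin (seminorm_topology P) {x. q x < 1}" using SN by simp
  have "0 \<in> {x. q x < 1}" using sn_zero[OF sq] by simp
  then obtain m e where e: "e > 0" and sub: "{y. Qs P m (y - 0) < e} \<subseteq> {x. q x < 1}"
    using op openin_sem[OF SN] by blast
  have H: "\<And>y. Qs P m y < e \<Longrightarrow> q y < 1" using sub by auto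
  have "\<forall>x. q x \<le> (2 / e) * Qs P m x"
  proof
    fix x
    show "q x \<le> (2 / e) * Qs P m x"
    proof (cases "Qs P m x = 0")
      case True
      show ?thesis
      proof (rule ccontr)
        assume "\<not> ?thesis"
        then have qx: "q x > 0" using True by simp
        define t where "t = 2 / q x"
        have "Qs P m (complex_of_real t *\<^sub>C x) = 0"
          using sn_scale[OF Qs_seminorm[OF SN]] True by simp
        then have "q (complex_of_real t *\<^sub>C x) < 1" using H e by simp
        moreover have "q (complex_of_real t *\<^sub>C x) = 2"
          using sn_scale[OF sq] qx by (simp add: t_def norm_divide)
        ultimately show False by simp
      qed
    next
      case False
      then have Qp: "Qs P m x > 0" using Qs_nonneg[OF SN, of m x] by simp
      define t where "t = e / (2 * Qs P m x)"
      have tp: "t > 0" using e Qp by (simp add: t_def)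
      have "Qs P m (complex_of_real t *\<^sub>C x) = t * Qs P m x"
        using sn_scale[OF Qs_seminorm[OF SN]] tp by simp
      also have "\<dots> = e / 2" using Qp by (simp add: t_def)
      finally have "q (complex_of_real t *\<^sub>C x) < 1" using H e by simp
      then have "t * q x < 1" using sn_scale[OF sq] tp by simp
      then have "q x < 1 / t" using tp by (simp add: field_simps)
      then show ?thesis using Qp e by (simp add: t_def field_simps)
    qed
  qed
  then show ?thesis using e by (intro exI[of _ m] exI[of _ "2 / e"]) simp
qed

lemma bound_cs:
  assumes SN: "SN P" and sq: "seminorm q" and c: "c \<ge> 0" and b: "\<forall>x. q x \<le> c * Qs P m x"
  shows "q \<in> cont_seminorms P"
  unfolding cont_seminorms_def continuous_map_def
proof (intro CollectI conjI allI impI sq)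
  show "q \<in> topspace (seminorm_topology P) \<rightarrow> topspace euclideanreal" by simp
  fix U :: "real set" assume "openin euclideanreal U"
  then have oU: "open U" by simp
  show "openin (seminorm_topology P) {x \<in> topspace (seminorm_topology P). q x \<in> U}"
    unfolding openin_sem[OF SN]
  proof
    fix x assume "x \<in> {x \<in> topspace (seminorm_topology P). q x \<in> U}"
    then have "q x \<in> U" by simp
    then have "\<exists>r>0. ball (q x) r \<subseteq> U" using open_contains_ball_eq[OF oU] by simp
    then obtain r where r: "r > 0" "ball (q x) r \<subseteq> U" by blast
    have "{y. Qs P m (y - x) < r / (c + 1)} \<subseteq> {x \<in> topspace (seminorm_topology P). q x \<in> U}"
    proof
      fix y assume "y \<in> {y. Qs P m (y - x) < r / (c + 1)}"
      then have "Qs P m (y - x) < r / (c + 1)" by simp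
      then have a: "Qs P m (y - x) * (c + 1) < r" using c by (simp add: pos_less_divide_eq)
      have b1: "c * Qs P m (y - x) \<le> Qs P m (y - x) * (c + 1)"
        using Qs_nonneg[OF SN, of m "y - x"] by (simp add: algebra_simps)
      have b2: "q (y - x) \<le> c * Qs P m (y - x)" using b by simp
      have qr: "q (y - x) < r" using a b1 b2 by linarith
      have "\<bar>q y - q x\<bar> \<le> q (y - x)" using sn_revtri[OF sq, of y x] .
      then have "\<bar>q y - q x\<bar> < r" using qr by linarith
      then have "dist (q x) (q y) < r" by (simp add: dist_real_def abs_minus_commute)
      then have "q y \<in> ball (q x) r" by simp
      then have "q y \<in> U" by (rule subsetD[OF r(2)])
      then show "y \<in> {x \<in> topspace (seminorm_topology P). q x \<in> U}" using SN by simp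
    qed
    moreover have "r / (c + 1) > 0" using r c by simp
    ultimately show "\<exists>m. \<exists>e>0. {y. Qs P m (y - x) < e} \<subseteq> {x \<in> topspace (seminorm_topology P). q x \<in> U}"
      by (intro exI[of _ m] exI[of _ "r / (c + 1)"]) simp
  qed
qed

lemma P_cs: assumes SN: "SN P" shows "P n \<in> cont_seminorms P"
proof (rule bound_cs[OF SN])
  show "seminorm (P n)" using SN by (simp add: SN_def)
  show "\<forall>x. P n x \<le> 1 * Qs P n x" using Qs_ge[OF SN order_refl] by simp
qed simp

lemma Qs_cs: assumes SN: "SN P" shows "Qs P m \<in> cont_seminorms P"
proof (rule bound_cs[OF SN])
  show "seminorm (Qs P m)" using Qs_seminorm[OF SN] .
  show "\<forall>x. Qs P m x \<le> 1 * Qs P m x" by simp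
qed simp

lemma seminorm_comp: assumes p: "seminorm p" and B: "clinear_map B" shows "seminorm (\<lambda>x. p (B x))"
  unfolding seminorm_def
proof (intro conjI allI)
  fix x y show "p (B (x + y)) \<le> p (B x) + p (B y)"
    unfolding clinear_add[OF B] by (rule sn_add[OF p])
next
  fix c x show "p (B (c *\<^sub>C x)) = cmod c * p (B x)"
    unfolding clinear_scale[OF B] by (rule sn_scale[OF p])
qed

lemma ops_bound:
  assumes SN: "SN P" and B: "B \<in> cont_ops P"
  shows "\<exists>m c. c \<ge> 0 \<and> (\<forall>x. P n (B x) \<le> c * Qs P m x)"
proof -
  have lin: "clinear_map B" and cB: "continuous_map (seminorm_topology P) (seminorm_topology P) B"
    using B by (auto simp: cont_ops_def)
  have pn: "continuous_map (seminorm_topology P) euclideanreal (P n)"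
    using P_cs[OF SN] by (simp add: cont_seminorms_def)
  have p: "seminorm (P n)" using SN by (simp add: SN_def)
  have "seminorm (\<lambda>x. P n (B x))" by (rule seminorm_comp[OF p lin])
  moreover have "continuous_map (seminorm_topology P) euclideanreal (\<lambda>x. P n (B x))"
    using continuous_map_compose[OF cB pn] by (simp add: o_def)
  ultimately have "(\<lambda>x. P n (B x)) \<in> cont_seminorms P" by (simp add: cont_seminorms_def)
  from cs_bound[OF SN this] show ?thesis .
qed

lemma bound_Qs:
  assumes SN: "SN P" and H: "\<forall>n. \<exists>m c. c \<ge> 0 \<and> (\<forall>x. P n (f x) \<le> c * Qs P m x)"
  shows "\<exists>M C. C \<ge> 0 \<and> (\<forall>x. Qs P m (f x) \<le> C * Qs P M x)"
proof (induction m)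
  case 0
  then show ?case using H by (simp add: Qs_def)
next
  case (Suc m)
  obtain M1 C1 where 1: "C1 \<ge> 0" "\<forall>x. Qs P m (f x) \<le> C1 * Qs P M1 x" using Suc by blast
  obtain M2 C2 where 2: "C2 \<ge> 0" "\<forall>x. P (Suc m) (f x) \<le> C2 * Qs P M2 x" using H by blast
  have "\<forall>x. Qs P (Suc m) (f x) \<le> (C1 + C2) * Qs P (max M1 M2) x"
  proof
    fix x
    have "Qs P (Suc m) (f x) = Qs P m (f x) + P (Suc m) (f x)" by (simp add: Qs_def)
    also have "\<dots> \<le> C1 * Qs P M1 x + C2 * Qs P M2 x" using 1 2 by (simp add: add_mono)
    also have "\<dots> \<le> C1 * Qs P (max M1 M2) x + C2 * Qs P (max M1 M2) x"
      using 1 2 Qs_mono[OF SN, of M1 "max M1 M2" x] Qs_mono[OF SN, of M2 "max M1 M2" x]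
      by (simp add: add_mono mult_left_mono)
    finally show "Qs P (Suc m) (f x) \<le> (C1 + C2) * Qs P (max M1 M2) x" by (simp add: distrib_right)
  qed
  then show ?case using 1 2 by (intro exI[of _ "max M1 M2"] exI[of _ "C1 + C2"]) simp
qed

lemma bound_ops:
  assumes SN: "SN P" and lin: "clinear_map B"
    and H: "\<forall>n. \<exists>m c. c \<ge> 0 \<and> (\<forall>x. P n (B x) \<le> c * Qs P m x)"
  shows "B \<in> cont_ops P"
  unfolding cont_ops_def continuous_map_def
proof (intro CollectI conjI allI impI lin)
  show "B \<in> topspace (seminorm_topology P) \<rightarrow> topspace (seminorm_topology P)" using SN by simp
  fix U assume U: "openin (seminorm_topology P) U"
  show "openin (seminorm_topology P) {x \<in> topspace (seminorm_topology P). B x \<in> U}"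
    unfolding openin_sem[OF SN]
  proof
    fix x assume "x \<in> {x \<in> topspace (seminorm_topology P). B x \<in> U}"
    then have "B x \<in> U" by simp
    then obtain m e where e: "e > 0" "{y. Qs P m (y - B x) < e} \<subseteq> U"
      using U openin_sem[OF SN] by blast
    obtain M C where C: "C \<ge> 0" "\<forall>x. Qs P m (B x) \<le> C * Qs P M x" using bound_Qs[OF SN H] by blast
    have "{y. Qs P M (y - x) < e / (C + 1)} \<subseteq> {x \<in> topspace (seminorm_topology P). B x \<in> U}"
    proof
      fix y assume "y \<in> {y. Qs P M (y - x) < e / (C + 1)}"
      then have "Qs P M (y - x) < e / (C + 1)" by simp
      then have a: "Qs P M (y - x) * (C + 1) < e" using C by (simp add: pos_less_divide_eq)
      have b: "C * Qs P M (y - x) \<le> Qs P M (y - x) * (C + 1)"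
        using Qs_nonneg[OF SN, of M "y - x"] by (simp add: algebra_simps)
      have "Qs P m (B y - B x) = Qs P m (B (y - x))" by (simp add: clinear_diff[OF lin])
      also have "\<dots> \<le> C * Qs P M (y - x)" using C by simp
      finally have "Qs P m (B y - B x) < e" using a b by linarith
      then have "B y \<in> U" using e(2) by auto
      then show "y \<in> {x \<in> topspace (seminorm_topology P). B x \<in> U}" using SN by simp
    qed
    moreover have "e / (C + 1) > 0" using e C by simp
    ultimately show "\<exists>m. \<exists>e>0. {y. Qs P m (y - x) < e} \<subseteq> {x \<in> topspace (seminorm_topology P). B x \<in> U}"
      by (intro exI[of _ M] exI[of _ "e / (C + 1)"]) simp
  qed
qed

lemma lim_unique:
  assumes F: "frechet P" and l1: "limitin (seminorm_topology P) f y F"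
    and l2: "limitin (seminorm_topology P) f z F" and nb: "F \<noteq> bot"
  shows "y = z"
proof -
  have SN: "SN P" using F SN_frechet by blast
  have p: "\<And>n. seminorm (P n)" using SN by (simp add: SN_def)
  have "\<forall>n. P n (y - z) = 0"
  proof
    fix n
    have "P n (y - z) \<le> 0"
    proof (rule field_le_epsilon)
      fix e :: real assume e: "e > 0"
      have "eventually (\<lambda>i. P n (f i - y) < e / 2) F" using l1 e unfolding limitin_sem[OF SN] by (meson half_gt_zero)
      moreover have "eventually (\<lambda>i. P n (f i - z) < e / 2) F" using l2 e unfolding limitin_sem[OF SN] by (meson half_gt_zero)
      ultimately have "eventually (\<lambda>i. P n (f i - y) < e / 2 \<and> P n (f i - z) < e / 2) F"
        by (rule eventually_conj)
      then obtain i where i: "P n (f i - y) < e / 2" "P n (f i - z) < e / 2"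
        using eventually_happens nb by blast
      have "P n (y - z) \<le> P n (y - f i) + P n (f i - z)" by (rule sn_tri[OF p])
      also have "\<dots> = P n (f i - y) + P n (f i - z)" using sn_commute[OF p] by simp
      finally show "P n (y - z) \<le> 0 + e" using i by simp
    qed
    then show "P n (y - z) = 0" using sn_nonneg[OF p, of n "y - z"] by simp
  qed
  then have "y - z = 0" using F unfolding frechet_def by blast
  then show ?thesis by simp
qed

lemma lim_ops:
  assumes SN: "SN P" and B: "B \<in> cont_ops P" and l: "limitin (seminorm_topology P) f y F"
  shows "limitin (seminorm_topology P) (\<lambda>i. B (f i)) (B y) F"
  unfolding limitin_sem[OF SN]
proof (intro allI impI)
  fix n and e :: real assume e: "e > 0"
  obtain m c where c: "c \<ge> 0" "\<forall>x. P n (B x) \<le> c * Qs P m x" using ops_bound[OF SN B] by blast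
  have lin: "clinear_map B" using B by (simp add: cont_ops_def)
  have "eventually (\<lambda>i. Qs P m (f i - y) < e / (c + 1)) F" using lim_Qs[OF SN l] e c by simp
  then show "eventually (\<lambda>i. P n (B (f i) - B y) < e) F"
  proof (rule eventually_mono)
    fix i assume "Qs P m (f i - y) < e / (c + 1)"
    then have a: "Qs P m (f i - y) * (c + 1) < e" using c by (simp add: pos_less_divide_eq)
    have b: "c * Qs P m (f i - y) \<le> Qs P m (f i - y) * (c + 1)"
      using Qs_nonneg[OF SN, of m "f i - y"] by (simp add: algebra_simps)
    have "P n (B (f i) - B y) = P n (B (f i - y))" by (simp add: clinear_diff[OF lin])
    also have "\<dots> \<le> c * Qs P m (f i - y)" using c by simp
    finally show "P n (B (f i) - B y) < e" using a b by linarith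
  qed
qed

lemma lim_add:
  assumes SN: "SN P" and l1: "limitin (seminorm_topology P) f y F" and l2: "limitin (seminorm_topology P) g z F"
  shows "limitin (seminorm_topology P) (\<lambda>i. f i + g i) (y + z) F"
  unfolding limitin_sem[OF SN]
proof (intro allI impI)
  fix n and e :: real assume e: "e > 0"
  have p: "seminorm (P n)" using SN by (simp add: SN_def)
  have "eventually (\<lambda>i. P n (f i - y) < e / 2) F" using l1 e unfolding limitin_sem[OF SN] by (meson half_gt_zero)
  moreover have "eventually (\<lambda>i. P n (g i - z) < e / 2) F" using l2 e unfolding limitin_sem[OF SN] by (meson half_gt_zero)
  ultimately have "eventually (\<lambda>i. P n (f i - y) < e / 2 \<and> P n (g i - z) < e / 2) F"
    by (rule eventually_conj)
  then show "eventually (\<lambda>i. P n (f i + g i - (y + z)) < e) F"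
  proof (rule eventually_mono)
    fix i assume i: "P n (f i - y) < e / 2 \<and> P n (g i - z) < e / 2"
    have eq: "f i + g i - (y + z) = (f i - y) + (g i - z)" by (simp add: algebra_simps)
    have "P n (f i + g i - (y + z)) \<le> P n (f i - y) + P n (g i - z)" by (subst eq) (rule sn_add[OF p])
    then show "P n (f i + g i - (y + z)) < e" using i by simp
  qed
qed

lemma lim_diff:
  assumes SN: "SN P" and l1: "limitin (seminorm_topology P) f y F" and l2: "limitin (seminorm_topology P) g z F"
  shows "limitin (seminorm_topology P) (\<lambda>i. f i - g i) (y - z) F"
  unfolding limitin_sem[OF SN]
proof (intro allI impI)
  fix n and e :: real assume e: "e > 0"
  have p: "seminorm (P n)" using SN by (simp add: SN_def)
  have "eventually (\<lambda>i. P n (f i - y) < e / 2) F" using l1 e unfolding limitin_sem[OF SN] by (meson half_gt_zero)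
  moreover have "eventually (\<lambda>i. P n (g i - z) < e / 2) F" using l2 e unfolding limitin_sem[OF SN] by (meson half_gt_zero)
  ultimately have "eventually (\<lambda>i. P n (f i - y) < e / 2 \<and> P n (g i - z) < e / 2) F"
    by (rule eventually_conj)
  then show "eventually (\<lambda>i. P n (f i - g i - (y - z)) < e) F"
  proof (rule eventually_mono)
    fix i assume i: "P n (f i - y) < e / 2 \<and> P n (g i - z) < e / 2"
    have eq: "f i - g i - (y - z) = (f i - y) - (g i - z)" by (simp add: algebra_simps)
    have "P n (f i - g i - (y - z)) \<le> P n (f i - y) + P n (g i - z)" by (subst eq) (rule sn_diff[OF p])
    then show "P n (f i - g i - (y - z)) < e" using i by simp
  qed
qed

lemma lim_scale:
  assumes SN: "SN P" and l: "limitin (seminorm_topology P) f y F"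
  shows "limitin (seminorm_topology P) (\<lambda>i. c *\<^sub>C f i) (c *\<^sub>C y) F"
  unfolding limitin_sem[OF SN]
proof (intro allI impI)
  fix n and e :: real assume e: "e > 0"
  have p: "seminorm (P n)" using SN by (simp add: SN_def)
  have "eventually (\<lambda>i. P n (f i - y) < e / (cmod c + 1)) F"
  proof -
    have "cmod c + 1 > 0" using norm_ge_zero[of c] by linarith
    then have "e / (cmod c + 1) > 0" using e by simp
    then show ?thesis using l unfolding limitin_sem[OF SN] by blast
  qed
  then show "eventually (\<lambda>i. P n (c *\<^sub>C f i - c *\<^sub>C y) < e) F"
  proof (rule eventually_mono)
    fix i assume "P n (f i - y) < e / (cmod c + 1)"
    moreover have "cmod c + 1 > 0" using norm_ge_zero[of c] by linarith
    ultimately have a: "P n (f i - y) * (cmod c + 1) < e" by (simp add: pos_less_divide_eq)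
    have b: "cmod c * P n (f i - y) \<le> P n (f i - y) * (cmod c + 1)"
      using sn_nonneg[OF p, of "f i - y"] by (simp add: algebra_simps)
    have "P n (c *\<^sub>C f i - c *\<^sub>C y) = cmod c * P n (f i - y)"
      by (simp add: scaleC_diff_right[symmetric] sn_scale[OF p])
    then show "P n (c *\<^sub>C f i - c *\<^sub>C y) < e" using a b by linarith
  qed
qed

lemma lim_const:
  assumes SN: "SN P" shows "limitin (seminorm_topology P) (\<lambda>i. y) y F"
  using SN by (simp add: limitin_sem sn_zero SN_def)

section \<open>Geometric estimate\<close>

lemma geo_tel: fixes q :: real assumes "i \<le> j"
  shows "(1 - q) * (\<Sum>k\<in>{i..<j}. q ^ k) = q ^ i - q ^ j"
  using assms
proof (induction j)
  case 0 then show ?case by simp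
next
  case (Suc j)
  show ?case
  proof (cases "i = Suc j")
    case True then show ?thesis by simp
  next
    case False
    then have "i \<le> j" using Suc.prems by simp
    then have "(\<Sum>k\<in>{i..<Suc j}. q ^ k) = (\<Sum>k\<in>{i..<j}. q ^ k) + q ^ j"
      by (simp add: sum.atLeastLessThan_Suc)
    then have "(1 - q) * (\<Sum>k\<in>{i..<Suc j}. q ^ k) = (1 - q) * (\<Sum>k\<in>{i..<j}. q ^ k) + (q ^ j - q ^ Suc j)"
      by (simp add: algebra_simps)
    then show ?thesis using Suc.IH[OF \<open>i \<le> j\<close>] by simp
  qed
qed

lemma geo:
  fixes d a :: real assumes d: "0 < d" and a: "0 < a"
  shows "(\<Sum>k\<in>{i..<j}. d * exp (- a * (real k * d))) \<le> exp (- a * (real i * d)) * (d + 1 / a)"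
proof (cases "i \<le> j")
  case False
  then show ?thesis using d a by (simp add: add_pos_pos less_imp_le)
next
  case True
  define q where "q = exp (- a * d)"
  have q0: "0 < q" and q1: "q < 1" using d a by (auto simp: q_def)
  have eq: "\<And>k. exp (- a * (real k * d)) = q ^ k"
  proof -
    fix k
    have "- a * (real k * d) = of_nat k * (- a * d)" by simp
    then show "exp (- a * (real k * d)) = q ^ k" unfolding q_def by (simp only: exp_of_nat_mult)
  qed
  have "(\<Sum>k\<in>{i..<j}. d * exp (- a * (real k * d))) = d * (\<Sum>k\<in>{i..<j}. q ^ k)"
    unfolding eq by (simp add: sum_distrib_left)
  also have "(\<Sum>k\<in>{i..<j}. q ^ k) = (q ^ i - q ^ j) / (1 - q)"
    using geo_tel[OF True, of q] q1 by (simp add: field_simps)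
  also have "\<dots> \<le> q ^ i / (1 - q)" using q0 q1 by (simp add: divide_right_mono)
  finally have 1: "(\<Sum>k\<in>{i..<j}. d * exp (- a * (real k * d))) \<le> q ^ i * (d / (1 - q))"
    using d by (simp add: mult_left_mono mult.commute)
  have "1 + a * d \<le> exp (a * d)" by (rule exp_ge_add_one_self)
  then have "(1 + a * d) * q \<le> exp (a * d) * q" using q0 by simp
  also have "exp (a * d) * q = 1" by (simp add: q_def exp_minus[symmetric] exp_add[symmetric])
  finally have "(1 + a * d) * q \<le> 1" .
  then have "d \<le> (d + 1 / a) * (1 - q)" using a by (simp add: field_simps)
  then have "d / (1 - q) \<le> d + 1 / a" using q1 by (simp add: divide_le_eq)
  then have "q ^ i * (d / (1 - q)) \<le> q ^ i * (d + 1 / a)" using q0 by (intro mult_left_mono) auto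
  with 1 have "(\<Sum>k\<in>{i..<j}. d * exp (- a * (real k * d))) \<le> q ^ i * (d + 1 / a)" by linarith
  then show ?thesis unfolding eq .
qed

locale sgp =
  fixes P :: "nat \<Rightarrow> 'a::cvector \<Rightarrow> real" and T :: "real \<Rightarrow> 'a \<Rightarrow> 'a" and \<omega> :: real and l :: complex
  assumes fr: "frechet P" and C0: "C0_semigroup P T" and eqc: "exp_equicont_order P T \<omega>"
    and lw: "\<omega> < Re l"
begin

lemma SN: "SN P" using fr by (rule SN_frechet)
lemma p: "seminorm (P n)" using SN by (simp add: SN_def)

lemma T_ops: "t \<ge> 0 \<Longrightarrow> T t \<in> cont_ops P" using C0 by (simp add: C0_semigroup_def)
lemma T_lin: "t \<ge> 0 \<Longrightarrow> clinear_map (T t)" using T_ops by (simp add: cont_ops_def)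
lemma T0: "T 0 x = x" using C0 by (simp add: C0_semigroup_def)
lemma T_add: "s \<ge> 0 \<Longrightarrow> t \<ge> 0 \<Longrightarrow> T (s + t) x = T s (T t x)"
  using C0 by (simp add: C0_semigroup_def)

definition \<alpha> where "\<alpha> = Re l - \<omega>"
lemma \<alpha>_pos: "\<alpha> > 0" using lw by (simp add: \<alpha>_def)

lemma T_bound: "\<exists>m C. C \<ge> 0 \<and> (\<forall>t\<ge>0. \<forall>x. exp (- \<omega> * t) * P n (T t x) \<le> C * Qs P m x)"
proof -
  have E: "equicontinuous P ((\<lambda>t x. complex_of_real (exp (- \<omega> * t)) *\<^sub>C T t x) ` {0..})"
    using eqc by (simp add: exp_equicont_order_def)
  obtain q C where q: "q \<in> cont_seminorms P" and C: "C \<ge> 0"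
    and b: "\<forall>B\<in>(\<lambda>t x. complex_of_real (exp (- \<omega> * t)) *\<^sub>C T t x) ` {0..}. \<forall>x. P n (B x) \<le> C * q x"
    using E P_cs[OF SN, of n] unfolding equicontinuous_def by blast
  obtain m c where c: "c \<ge> 0" "\<forall>x. q x \<le> c * Qs P m x" using cs_bound[OF SN q] by blast
  have "\<forall>t\<ge>0. \<forall>x. exp (- \<omega> * t) * P n (T t x) \<le> (C * c) * Qs P m x"
  proof (intro allI impI)
    fix t :: real and x assume t: "t \<ge> 0"
    have "P n (complex_of_real (exp (- \<omega> * t)) *\<^sub>C T t x) \<le> C * q x" using b t by auto
    then have "exp (- \<omega> * t) * P n (T t x) \<le> C * q x" by (simp add: sn_scale[OF p])
    also have "\<dots> \<le> C * (c * Qs P m x)" using c C by (simp add: mult_left_mono)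
    finally show "exp (- \<omega> * t) * P n (T t x) \<le> (C * c) * Qs P m x" by (simp add: mult.assoc)
  qed
  then show ?thesis using C c by (intro exI[of _ m] exI[of _ "C * c"]) simp
qed

definition QQ :: "nat \<Rightarrow> 'a \<Rightarrow> real" where
  "QQ n x = (SUP t\<in>{0..}. exp (- \<omega> * t) * P n (T t x))"

lemma QQ_bdd: "bdd_above ((\<lambda>t. exp (- \<omega> * t) * P n (T t x)) ` {0..})"
proof -
  obtain m C where "C \<ge> 0" "\<forall>t\<ge>0. \<forall>x. exp (- \<omega> * t) * P n (T t x) \<le> C * Qs P m x"
    using T_bound by blast
  then show ?thesis by (intro bdd_aboveI[of _ "C * Qs P m x"]) auto
qed

lemma QQ_ub: "t \<ge> 0 \<Longrightarrow> exp (- \<omega> * t) * P n (T t x) \<le> QQ n x"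
  unfolding QQ_def by (rule cSUP_upper[OF _ QQ_bdd]) simp

lemma QQ_least: "(\<And>t. t \<ge> 0 \<Longrightarrow> exp (- \<omega> * t) * P n (T t x) \<le> M) \<Longrightarrow> QQ n x \<le> M"
  unfolding QQ_def by (rule cSUP_least) auto

lemma QQ_bound: "\<exists>m C. C \<ge> 0 \<and> (\<forall>x. QQ n x \<le> C * Qs P m x)"
proof -
  obtain m C where C: "C \<ge> 0" "\<forall>t\<ge>0. \<forall>x. exp (- \<omega> * t) * P n (T t x) \<le> C * Qs P m x"
    using T_bound by blast
  then have "\<forall>x. QQ n x \<le> C * Qs P m x" by (auto intro: QQ_least)
  then show ?thesis using C by blast
qed

lemma QQ_ge: "P n x \<le> QQ n x"
  using QQ_ub[of 0 n x] by (simp add: T0)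

lemma QQ_nonneg: "0 \<le> QQ n x"
  using QQ_ge[of n x] sn_nonneg[OF p, of n x] by linarith

lemma QQ_add: "QQ n (x + y) \<le> QQ n x + QQ n y"
proof (rule QQ_least)
  fix t :: real assume t: "t \<ge> 0"
  have "exp (- \<omega> * t) * P n (T t (x + y)) \<le> exp (- \<omega> * t) * (P n (T t x) + P n (T t y))"
    using sn_add[OF p] clinear_add[OF T_lin[OF t]] by (simp add: mult_left_mono)
  also have "\<dots> = exp (- \<omega> * t) * P n (T t x) + exp (- \<omega> * t) * P n (T t y)"
    by (simp add: distrib_left)
  also have "\<dots> \<le> QQ n x + QQ n y" using QQ_ub[OF t] by (simp add: add_mono)
  finally show "exp (- \<omega> * t) * P n (T t (x + y)) \<le> QQ n x + QQ n y" .
qed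

lemma QQ_scale: "QQ n (c *\<^sub>C x) \<le> cmod c * QQ n x"
proof (rule QQ_least)
  fix t :: real assume t: "t \<ge> 0"
  have "exp (- \<omega> * t) * P n (T t (c *\<^sub>C x)) = cmod c * (exp (- \<omega> * t) * P n (T t x))"
    using sn_scale[OF p] clinear_scale[OF T_lin[OF t]] by simp
  also have "\<dots> \<le> cmod c * QQ n x" using QQ_ub[OF t] by (simp add: mult_left_mono)
  finally show "exp (- \<omega> * t) * P n (T t (c *\<^sub>C x)) \<le> cmod c * QQ n x" .
qed

lemma QQ_zero: "QQ n 0 = 0"
  using QQ_scale[of n 0 0] QQ_nonneg[of n 0] by simp

lemma QQ_minus: "QQ n (- x) \<le> QQ n x"
  using QQ_scale[of n "-1" x] by (simp add: scaleC_minus_left scaleC_one)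

lemma QQ_diff: "QQ n (x - y) \<le> QQ n x + QQ n y"
  using QQ_add[of n x "- y"] QQ_minus[of n y] by simp

lemma QQ_tri: "QQ n (x - z) \<le> QQ n (x - y) + QQ n (y - z)"
  using QQ_add[of n "x - y" "y - z"] by simp

lemma QQ_sum: "QQ n (sum f A) \<le> (\<Sum>i\<in>A. QQ n (f i))"
proof (induction A rule: infinite_finite_induct)
  case (insert x F)
  then show ?case using QQ_add[of n "f x" "sum f F"] by simp
qed (auto simp: QQ_zero)

lemma QQ_T: "s \<ge> 0 \<Longrightarrow> QQ n (T s x) \<le> exp (\<omega> * s) * QQ n x"
proof (rule QQ_least)
  fix t :: real assume s: "s \<ge> 0" and t: "t \<ge> 0"
  have "exp (- \<omega> * t) * P n (T t (T s x)) = exp (\<omega> * s) * (exp (- \<omega> * (t + s)) * P n (T (t + s) x))"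
    using T_add[OF t s] by (simp add: exp_add[symmetric] algebra_simps)
  also have "\<dots> \<le> exp (\<omega> * s) * QQ n x" using QQ_ub[of "t + s"] s t by (simp add: mult_left_mono)
  finally show "exp (- \<omega> * t) * P n (T t (T s x)) \<le> exp (\<omega> * s) * QQ n x" .
qed

lemma lim_QQ: "limitin (seminorm_topology P) f y F \<Longrightarrow> e > 0 \<Longrightarrow> eventually (\<lambda>i. QQ n (f i - y) < e) F"
proof -
  assume l: "limitin (seminorm_topology P) f y F" and e: "e > 0"
  obtain m C where C: "C \<ge> 0" "\<forall>x. QQ n x \<le> C * Qs P m x" using QQ_bound by blast
  have "eventually (\<lambda>i. Qs P m (f i - y) < e / (C + 1)) F" using lim_Qs[OF SN l] e C by simp
  then show ?thesis
  proof (rule eventually_mono)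
    fix i assume "Qs P m (f i - y) < e / (C + 1)"
    then have a: "Qs P m (f i - y) * (C + 1) < e" using C by (simp add: pos_less_divide_eq)
    have "C * Qs P m (f i - y) \<le> Qs P m (f i - y) * (C + 1)"
      using Qs_nonneg[OF SN, of m "f i - y"] by (simp add: algebra_simps)
    then show "QQ n (f i - y) < e" using a C(2)[rule_format, of "f i - y"] by linarith
  qed
qed

end

context sgp begin

definition g :: "real \<Rightarrow> 'a \<Rightarrow> 'a" where
  "g t x = exp (- (l * complex_of_real t)) *\<^sub>C T t x"

lemma scaleC_comm: "a *\<^sub>C (b *\<^sub>C (x::'a)) = b *\<^sub>C (a *\<^sub>C x)"
  by (simp add: scaleC_scaleC mult.commute)

lemma g0: "g 0 x = x" by (simp add: g_def T0 scaleC_one)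

lemma g_add: "s \<ge> 0 \<Longrightarrow> t \<ge> 0 \<Longrightarrow> g (s + t) x = exp (- (l * complex_of_real s)) *\<^sub>C T s (g t x)"
proof -
  assume s: "s \<ge> 0" and t: "t \<ge> 0"
  have "exp (- (l * complex_of_real (s + t))) = exp (- (l * complex_of_real s)) * exp (- (l * complex_of_real t))"
    by (simp add: exp_add[symmetric] algebra_simps)
  then show ?thesis
    by (simp add: g_def T_add[OF s t] clinear_scale[OF T_lin[OF s]] scaleC_scaleC)
qed

lemma g_plus: "t \<ge> 0 \<Longrightarrow> g t (x + y) = g t x + g t y"
  by (simp add: g_def clinear_add[OF T_lin] scaleC_add_right)
lemma g_diff: "t \<ge> 0 \<Longrightarrow> g t (x - y) = g t x - g t y"
  by (simp add: g_def clinear_diff[OF T_lin] scaleC_diff_right)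
lemma g_scale: "t \<ge> 0 \<Longrightarrow> g t (c *\<^sub>C x) = c *\<^sub>C g t x"
  by (simp add: g_def clinear_scale[OF T_lin] scaleC_comm)
lemma g_T: "t \<ge> 0 \<Longrightarrow> s \<ge> 0 \<Longrightarrow> g t (T s x) = T s (g t x)"
proof -
  assume t: "t \<ge> 0" and s: "s \<ge> 0"
  have "T t (T s x) = T s (T t x)" using T_add[OF t s] T_add[OF s t] by (simp add: add.commute)
  then show ?thesis by (simp add: g_def clinear_scale[OF T_lin[OF s]])
qed

lemma QQ_eT: "s \<ge> 0 \<Longrightarrow> QQ n (exp (- (l * complex_of_real s)) *\<^sub>C T s y) \<le> exp (- \<alpha> * s) * QQ n y"
proof -
  assume s: "s \<ge> 0"
  have "QQ n (exp (- (l * complex_of_real s)) *\<^sub>C T s y) \<le> cmod (exp (- (l * complex_of_real s))) * QQ n (T s y)"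
    by (rule QQ_scale)
  also have "cmod (exp (- (l * complex_of_real s))) = exp (- (Re l * s))" by simp
  also have "exp (- (Re l * s)) * QQ n (T s y) \<le> exp (- (Re l * s)) * (exp (\<omega> * s) * QQ n y)"
    using QQ_T[OF s] by (simp add: mult_left_mono)
  also have "\<dots> = exp (- \<alpha> * s) * QQ n y"
    by (simp add: \<alpha>_def exp_add[symmetric] algebra_simps)
  finally show ?thesis .
qed

lemma QQ_g: "t \<ge> 0 \<Longrightarrow> QQ n (g t x) \<le> exp (- \<alpha> * t) * QQ n x"
  unfolding g_def by (rule QQ_eT)

lemma T_cont0:
  assumes e: "e > 0" shows "\<exists>d>0. \<forall>t. 0 \<le> t \<and> t < d \<longrightarrow> Qs P m (T t x - x) < e"
proof -
  have cm: "continuous_map (top_of_set {0..}) (seminorm_topology P) (\<lambda>t. T t x)"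
    using C0 by (simp add: C0_semigroup_def)
  have "openin (top_of_set {0..}) {t \<in> topspace (top_of_set {0..}). T t x \<in> {y. Qs P m (y - x) < e}}"
    using cm ball_open[OF SN] unfolding continuous_map_def by blast
  then obtain U where U: "open U"
    "{t \<in> topspace (top_of_set {0..}). T t x \<in> {y. Qs P m (y - x) < e}} = {0..} \<inter> U"
    unfolding openin_open by blast
  have "(0::real) \<in> {t \<in> topspace (top_of_set {0..}). T t x \<in> {y. Qs P m (y - x) < e}}"
    using e by (simp add: T0 sn_zero[OF Qs_seminorm[OF SN]])
  then have "(0::real) \<in> U" using U by blast
  then have "\<exists>d>0. ball 0 d \<subseteq> U" using open_contains_ball_eq[OF U(1)] by simp
  then obtain d where d: "d > 0" "ball 0 d \<subseteq> U" by blast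
  show ?thesis
  proof (intro exI[of _ d] conjI allI impI d(1))
    fix t :: real assume t: "0 \<le> t \<and> t < d"
    then have "t \<in> ball 0 d" by (simp add: dist_real_def)
    then have "t \<in> {0..} \<inter> U" using d(2) t by auto
    then have "t \<in> {t \<in> topspace (top_of_set {0..}). T t x \<in> {y. Qs P m (y - x) < e}}" using U(2) by simp
    then show "Qs P m (T t x - x) < e" by simp
  qed
qed

lemma g_small:
  assumes e: "e > 0" shows "\<exists>d>0. \<forall>t. 0 \<le> t \<and> t \<le> d \<longrightarrow> QQ n (g t x - x) \<le> e"
proof -
  obtain m C where C: "C \<ge> 0" "\<forall>z. QQ n z \<le> C * Qs P m z" using QQ_bound by blast
  define e1 where "e1 = e / (4 * (C + 1))"
  have e1: "e1 > 0" using e C by (simp add: e1_def)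
  obtain d1 where d1: "d1 > 0" "\<forall>t. 0 \<le> t \<and> t < d1 \<longrightarrow> Qs P m (T t x - x) < e1"
    using T_cont0[OF e1] by blast
  define e2 where "e2 = min 1 (e / (2 * (QQ n x + 1)))"
  have qx: "QQ n x \<ge> 0" by (rule QQ_nonneg)
  have e2: "e2 > 0" using e qx by (simp add: e2_def)
  have "isCont (\<lambda>t::real. exp (- (l * complex_of_real t))) 0" by (intro continuous_intros)
  then have "((\<lambda>t::real. exp (- (l * complex_of_real t))) \<longlongrightarrow> 1) (at 0)"
    by (simp add: isCont_def)
  then have "eventually (\<lambda>t. dist (exp (- (l * complex_of_real t))) 1 < e2) (at (0::real))"
    using e2 unfolding tendsto_iff by blast
  then obtain d2 where d2: "d2 > 0"
    "\<forall>t::real. t \<noteq> 0 \<and> dist t 0 < d2 \<longrightarrow> dist (exp (- (l * complex_of_real t))) 1 < e2"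
    unfolding eventually_at by auto
  define d where "d = min d1 d2 / 2"
  show ?thesis
  proof (intro exI[of _ d] conjI allI impI)
    show "d > 0" using d1 d2 by (simp add: d_def)
    fix t :: real assume t: "0 \<le> t \<and> t \<le> d"
    define c where "c = exp (- (l * complex_of_real t))"
    have c1: "cmod (c - 1) < e2"
    proof (cases "t = 0")
      case True then show ?thesis using e2 by (simp add: c_def)
    next
      case False
      then have "dist t 0 < d2" using t d1 d2 by (simp add: d_def dist_real_def)
      then show ?thesis using d2(2) False by (simp add: c_def dist_norm)
    qed
    have "cmod c = cmod ((c - 1) + 1)" by simp
    also have "\<dots> \<le> cmod (c - 1) + 1" using norm_triangle_ineq[of "c - 1" 1] by simp
    finally have c2: "cmod c \<le> 2" using c1 e2_def by linarith
    have q1: "Qs P m (T t x - x) < e1" using d1 t d2 by (simp add: d_def)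
    have eq: "g t x - x = c *\<^sub>C (T t x - x) + (c - 1) *\<^sub>C x"
      by (simp add: g_def c_def scaleC_diff_right scaleC_diff_left scaleC_one)
    have "QQ n (g t x - x) \<le> QQ n (c *\<^sub>C (T t x - x)) + QQ n ((c - 1) *\<^sub>C x)"
      unfolding eq by (rule QQ_add)
    also have "\<dots> \<le> cmod c * QQ n (T t x - x) + cmod (c - 1) * QQ n x"
      by (intro add_mono QQ_scale)
    also have "\<dots> \<le> 2 * (C * e1) + e2 * QQ n x"
    proof (intro add_mono mult_mono)
      show "QQ n (T t x - x) \<le> C * e1"
        using C(2)[rule_format, of "T t x - x"] q1 C(1) mult_left_mono[of "Qs P m (T t x - x)" e1 C] by linarith
    qed (use c1 c2 C e1 e2 qx QQ_nonneg in auto)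
    also have "\<dots> \<le> e"
    proof -
      have "2 * (C * e1) = e / 2 * (C / (C + 1))" using C by (simp add: e1_def field_simps)
      also have "\<dots> \<le> e / 2" using C e by (simp add: mult_left_le divide_le_eq)
      finally have a: "2 * (C * e1) \<le> e / 2" .
      have "e2 \<le> e / (2 * (QQ n x + 1))" by (simp add: e2_def)
      then have "e2 * QQ n x \<le> e / (2 * (QQ n x + 1)) * QQ n x" using qx by (rule mult_right_mono)
      also have "\<dots> = e / 2 * (QQ n x / (QQ n x + 1))" using qx by (simp add: field_simps)
      also have "\<dots> \<le> e / 2" using qx e by (simp add: mult_left_le divide_le_eq)
      finally show ?thesis using a by linarith
    qed
    finally show "QQ n (g t x - x) \<le> e" .
  qed
qed

end

definition dl :: "nat \<Rightarrow> real" where "dl N = (1/2) ^ N"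
definition KK :: "nat \<Rightarrow> nat" where "KK N = N * 2 ^ N"

lemma dl_pos: "dl N > 0" by (simp add: dl_def)
lemma dl_le1: "dl N \<le> 1" by (simp add: dl_def power_le_one)
lemma dl_rel: "N \<le> M \<Longrightarrow> real (2 ^ (M - N)) * dl M = dl N"
proof -
  assume "N \<le> M"
  then have "M = (M - N) + N" by simp
  then have "dl M = (1/2) ^ (M - N) * (1/2) ^ N" unfolding dl_def by (metis power_add)
  then show ?thesis by (simp add: dl_def power_one_over)
qed
lemma KK_dl: "real (KK N) * dl N = real N"
  by (simp add: KK_def dl_def power_one_over)

context sgp begin

definition S :: "nat \<Rightarrow> 'a \<Rightarrow> 'a" where
  "S N x = (\<Sum>k<KK N. complex_of_real (dl N) *\<^sub>C g (real k * dl N) x)"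

lemma QQ_term: "t \<ge> 0 \<Longrightarrow> d \<ge> 0 \<Longrightarrow>
    QQ n (complex_of_real d *\<^sub>C (exp (- (l * complex_of_real t)) *\<^sub>C T t y)) \<le> d * exp (- \<alpha> * t) * QQ n y"
proof -
  assume t: "t \<ge> 0" and d: "d \<ge> 0"
  have "QQ n (complex_of_real d *\<^sub>C (exp (- (l * complex_of_real t)) *\<^sub>C T t y))
      \<le> cmod (complex_of_real d) * QQ n (exp (- (l * complex_of_real t)) *\<^sub>C T t y)" by (rule QQ_scale)
  also have "\<dots> \<le> d * (exp (- \<alpha> * t) * QQ n y)" using d QQ_eT[OF t] by (simp add: mult_left_mono)
  finally show ?thesis by (simp add: mult.assoc)
qed

lemma QQ_gterm: "t \<ge> 0 \<Longrightarrow> d \<ge> 0 \<Longrightarrow> QQ n (complex_of_real d *\<^sub>C g t y) \<le> d * exp (- \<alpha> * t) * QQ n y"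
  unfolding g_def by (rule QQ_term)

lemma QQ_tail: "QQ n (\<Sum>k\<in>{i..<j}. complex_of_real (dl N) *\<^sub>C g (real k * dl N) x)
    \<le> exp (- \<alpha> * (real i * dl N)) * (dl N + 1 / \<alpha>) * QQ n x"
proof -
  have "QQ n (\<Sum>k\<in>{i..<j}. complex_of_real (dl N) *\<^sub>C g (real k * dl N) x)
      \<le> (\<Sum>k\<in>{i..<j}. QQ n (complex_of_real (dl N) *\<^sub>C g (real k * dl N) x))" by (rule QQ_sum)
  also have "\<dots> \<le> (\<Sum>k\<in>{i..<j}. dl N * exp (- \<alpha> * (real k * dl N)) * QQ n x)"
    by (intro sum_mono QQ_gterm) (auto simp: dl_pos less_imp_le)
  also have "\<dots> = (\<Sum>k\<in>{i..<j}. dl N * exp (- \<alpha> * (real k * dl N))) * QQ n x"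
    by (simp add: sum_distrib_right)
  also have "\<dots> \<le> exp (- \<alpha> * (real i * dl N)) * (dl N + 1 / \<alpha>) * QQ n x"
    by (intro mult_right_mono geo dl_pos \<alpha>_pos QQ_nonneg)
  finally show ?thesis .
qed

lemma S_bound: "QQ n (S N x) \<le> (dl N + 1 / \<alpha>) * QQ n x"
  using QQ_tail[where i=0 and j="KK N" and N=N and x=x and n=n] by (simp add: S_def atLeast0LessThan)

lemma S_plus: "S N (x + y) = S N x + S N y"
  by (simp add: S_def g_plus dl_pos less_imp_le scaleC_add_right sum.distrib)
lemma S_diff: "S N (x - y) = S N x - S N y"
  by (simp add: S_def g_diff dl_pos less_imp_le scaleC_diff_right sum_subtractf)
lemma S_scale: "S N (c *\<^sub>C x) = c *\<^sub>C S N x"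
  by (simp add: S_def g_scale dl_pos less_imp_le scaleC_sum_right scaleC_comm)
lemma S_T: "s \<ge> 0 \<Longrightarrow> S N (T s x) = T s (S N x)"
  by (simp add: S_def g_T dl_pos less_imp_le clinear_sum[OF T_lin] clinear_scale[OF T_lin])

end

context sgp begin

lemma S_cauchy_est:
  assumes NM: "N \<le> M" and E: "\<forall>t. 0 \<le> t \<and> t \<le> dl N \<longrightarrow> QQ n (g t x - x) \<le> E"
  shows "QQ n (S M x - S N x) \<le> (dl N + 1 / \<alpha>) * E + exp (- \<alpha> * real N) * (dl M + 1 / \<alpha>) * QQ n x"
proof -
  define m where "m = (2::nat) ^ (M - N)"
  define \<tau> where "\<tau> = (\<lambda>k'. complex_of_real (dl M) *\<^sub>C g (real k' * dl M) x)"
  have E0: "E \<ge> 0" using E[rule_format, of 0] dl_pos[of N] by (simp add: g0 QQ_zero)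
  have rel: "real m * dl M = dl N" unfolding m_def using dl_rel[OF NM] by simp
  have KKm: "KK N * m = N * 2 ^ M"
  proof -
    have "(2::nat) ^ N * 2 ^ (M - N) = 2 ^ M" using NM by (simp add: power_add[symmetric])
    then show ?thesis by (simp add: KK_def m_def mult.assoc)
  qed
  have KKle: "KK N * m \<le> KK M" unfolding KKm using NM by (simp add: KK_def)
  have split: "S M x = (\<Sum>k'<KK N * m. \<tau> k') + (\<Sum>k'\<in>{KK N * m..<KK M}. \<tau> k')"
    unfolding S_def \<tau>_def atLeast0LessThan[symmetric]
    by (rule sum.atLeastLessThan_concat[symmetric]) (use KKle in auto)
  have grp: "(\<Sum>k'<KK N * m. \<tau> k') = (\<Sum>k<KK N. \<Sum>j<m. \<tau> (k * m + j))"
  proof -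
    have "(\<Sum>k'<KK N * m. \<tau> k') = (\<Sum>k<KK N. sum \<tau> {k * m..<k * m + m})"
      by (rule sum.nat_group[symmetric])
    also have "\<dots> = (\<Sum>k<KK N. \<Sum>j<m. \<tau> (k * m + j))"
    proof (rule sum.cong[OF refl])
      fix k
      show "sum \<tau> {k * m..<k * m + m} = (\<Sum>j<m. \<tau> (k * m + j))"
        using sum.shift_bounds_nat_ivl[of \<tau> 0 "k * m" m] by (simp add: add.commute atLeast0LessThan)
    qed
    finally show ?thesis .
  qed
  have SN_eq: "S N x = (\<Sum>k<KK N. \<Sum>j<m. complex_of_real (dl M) *\<^sub>C g (real k * dl N) x)"
    unfolding S_def
  proof (rule sum.cong[OF refl])
    fix k
    have "(\<Sum>j<m. complex_of_real (dl M) *\<^sub>C g (real k * dl N) x)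
        = (\<Sum>j<m. complex_of_real (dl M)) *\<^sub>C g (real k * dl N) x" by (rule scaleC_sum_left[symmetric])
    also have "(\<Sum>j<m. complex_of_real (dl M)) = complex_of_real (dl N)"
      by (simp add: rel[symmetric])
    finally show "complex_of_real (dl N) *\<^sub>C g (real k * dl N) x
        = (\<Sum>j<m. complex_of_real (dl M) *\<^sub>C g (real k * dl N) x)" by simp
  qed
  have trm: "QQ n (\<tau> (k * m + j) - complex_of_real (dl M) *\<^sub>C g (real k * dl N) x)
      \<le> dl M * exp (- \<alpha> * (real k * dl N)) * E" if j: "j < m" for k j
  proof -
    have kn: "real k * dl N \<ge> 0" and jm: "real j * dl M \<ge> 0" using dl_pos by (auto simp: less_imp_le)
    have jle: "real j * dl M \<le> dl N"
    proof -
      have "real j * dl M \<le> real m * dl M" using j dl_pos by (simp add: mult_right_mono less_imp_le)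
      then show ?thesis using rel by simp
    qed
    have "real (k * m + j) * dl M = real k * (real m * dl M) + real j * dl M"
      by (simp add: algebra_simps)
    then have arg: "real (k * m + j) * dl M = real k * dl N + real j * dl M"
      using rel by simp
    let ?c = "exp (- (l * complex_of_real (real k * dl N)))"
    have "\<tau> (k * m + j) - complex_of_real (dl M) *\<^sub>C g (real k * dl N) x
        = complex_of_real (dl M) *\<^sub>C (?c *\<^sub>C T (real k * dl N) (g (real j * dl M) x - x))"
      unfolding \<tau>_def arg g_add[OF kn jm]
      by (simp add: g_def[of "real k * dl N"] scaleC_diff_right clinear_diff[OF T_lin[OF kn]])
    also have "QQ n \<dots> \<le> dl M * exp (- \<alpha> * (real k * dl N)) * QQ n (g (real j * dl M) x - x)"
      by (rule QQ_term[OF kn]) (use dl_pos in \<open>simp add: less_imp_le\<close>)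
    also have "\<dots> \<le> dl M * exp (- \<alpha> * (real k * dl N)) * E"
      using E jm jle dl_pos by (intro mult_left_mono) (auto simp: less_imp_le)
    finally show ?thesis .
  qed
  have main: "QQ n ((\<Sum>k'<KK N * m. \<tau> k') - S N x) \<le> (dl N + 1 / \<alpha>) * E"
  proof -
    have "(\<Sum>k'<KK N * m. \<tau> k') - S N x
        = (\<Sum>k<KK N. \<Sum>j<m. \<tau> (k * m + j) - complex_of_real (dl M) *\<^sub>C g (real k * dl N) x)"
      unfolding grp SN_eq by (simp add: sum_subtractf)
    also have "QQ n \<dots> \<le> (\<Sum>k<KK N. \<Sum>j<m. QQ n (\<tau> (k * m + j) - complex_of_real (dl M) *\<^sub>C g (real k * dl N) x))"
      by (rule order_trans[OF QQ_sum sum_mono[OF QQ_sum]])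
    also have "\<dots> \<le> (\<Sum>k<KK N. \<Sum>j<m. dl M * exp (- \<alpha> * (real k * dl N)) * E)"
      by (intro sum_mono trm) simp
    also have "\<dots> = (\<Sum>k<KK N. dl N * exp (- \<alpha> * (real k * dl N)) * E)"
      by (rule sum.cong[OF refl]) (simp add: rel[symmetric] mult_ac)
    also have "\<dots> = (\<Sum>k<KK N. dl N * exp (- \<alpha> * (real k * dl N))) * E"
      by (simp add: sum_distrib_right)
    also have "\<dots> \<le> (dl N + 1 / \<alpha>) * E"
      using geo[OF dl_pos[of N] \<alpha>_pos, where i=0 and j="KK N"] E0 by (intro mult_right_mono) (simp_all add: atLeast0LessThan)
    finally show ?thesis .
  qed
  have tail: "QQ n (\<Sum>k'\<in>{KK N * m..<KK M}. \<tau> k') \<le> exp (- \<alpha> * real N) * (dl M + 1 / \<alpha>) * QQ n x"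
  proof -
    have "real (KK N * m) * dl M = real N"
    proof -
      have "real (KK N * m) * dl M = real (KK N) * (real m * dl M)" by simp
      also have "\<dots> = real N" using rel KK_dl by simp
      finally show ?thesis .
    qed
    then show ?thesis unfolding \<tau>_def using QQ_tail[where i="KK N * m" and j="KK M" and N=M and x=x and n=n] by simp
  qed
  have "S M x - S N x = ((\<Sum>k'<KK N * m. \<tau> k') - S N x) + (\<Sum>k'\<in>{KK N * m..<KK M}. \<tau> k')"
    unfolding split by (simp add: algebra_simps)
  then have "QQ n (S M x - S N x) \<le> QQ n ((\<Sum>k'<KK N * m. \<tau> k') - S N x) + QQ n (\<Sum>k'\<in>{KK N * m..<KK M}. \<tau> k')"
    by (simp only: QQ_add)
  then show ?thesis using main tail by linarith
qed

end

lemma ev_pow_small: fixes x :: real assumes "0 \<le> x" "x < 1" "e > 0"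
  shows "eventually (\<lambda>N. x ^ N < e) sequentially"
proof -
  have "(\<lambda>N. x ^ N) \<longlonglongrightarrow> 0" using assms by (intro LIMSEQ_power_zero) simp
  then show ?thesis using assms(3) by (rule order_tendstoD)
qed

lemma ev_dl_small: "e > 0 \<Longrightarrow> eventually (\<lambda>N. dl N < e) sequentially"
  unfolding dl_def by (rule ev_pow_small) auto

lemma ev_exp_small: assumes a: "a > 0" and e: "e > 0"
  shows "eventually (\<lambda>N. exp (- a * real N) < e) sequentially"
proof -
  have "eventually (\<lambda>N. exp (- a) ^ N < e) sequentially" using a e by (intro ev_pow_small) auto
  moreover have "\<And>N. exp (- a) ^ N = exp (- a * real N)"
    by (simp add: exp_of_nat_mult[symmetric] mult.commute)
  ultimately show ?thesis by simp
qed

lemma dl_mono: "N \<le> M \<Longrightarrow> dl M \<le> dl N"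
  unfolding dl_def by (rule power_decreasing) auto

context sgp begin

lemma S_cauchy: "\<forall>n e. 0 < e \<longrightarrow> (\<exists>N. \<forall>k\<ge>N. \<forall>j\<ge>N. P n (S k x - S j x) < e)"
proof (intro allI impI)
  fix n and e :: real assume e: "0 < e"
  define B where "B = 1 + 1 / \<alpha>"
  have B: "B > 0" using \<alpha>_pos by (simp add: B_def add_pos_pos)
  define e' where "e' = e / (4 * B)"
  have e': "e' > 0" using e B by (simp add: e'_def)
  obtain d where d: "d > 0" "\<forall>t. 0 \<le> t \<and> t \<le> d \<longrightarrow> QQ n (g t x - x) \<le> e'"
    using g_small[OF e'] by blast
  have "eventually (\<lambda>N. dl N < d) sequentially" by (rule ev_dl_small[OF d(1)])
  moreover have "eventually (\<lambda>N. exp (- \<alpha> * real N) < e / (4 * B * (QQ n x + 1))) sequentially"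
    using e B QQ_nonneg[of n x] \<alpha>_pos by (intro ev_exp_small) (auto intro!: divide_pos_pos mult_pos_pos add_nonneg_pos)
  ultimately have "eventually (\<lambda>N. dl N < d \<and> exp (- \<alpha> * real N) < e / (4 * B * (QQ n x + 1))) sequentially"
    by (rule eventually_conj)
  then obtain N0 where N0: "\<And>N. N \<ge> N0 \<Longrightarrow> dl N < d \<and> exp (- \<alpha> * real N) < e / (4 * B * (QQ n x + 1))"
    unfolding eventually_sequentially by blast
  have key: "P n (S k x - S j x) < e" if jk: "N0 \<le> j" "j \<le> k" for j k
  proof -
    have dj: "dl j < d" and ej: "exp (- \<alpha> * real j) < e / (4 * B * (QQ n x + 1))" using N0 jk by auto
    have E: "\<forall>t. 0 \<le> t \<and> t \<le> dl j \<longrightarrow> QQ n (g t x - x) \<le> e'" using d dj by auto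
    have "P n (S k x - S j x) \<le> QQ n (S k x - S j x)" by (rule QQ_ge)
    also have "\<dots> \<le> (dl j + 1 / \<alpha>) * e' + exp (- \<alpha> * real j) * (dl k + 1 / \<alpha>) * QQ n x"
      by (rule S_cauchy_est[OF jk(2) E])
    also have "\<dots> \<le> B * e' + exp (- \<alpha> * real j) * B * QQ n x"
    proof (intro add_mono mult_right_mono mult_left_mono)
      show "dl j + 1 / \<alpha> \<le> B" using dl_le1 by (simp add: B_def)
      show "dl k + 1 / \<alpha> \<le> B" using dl_le1 by (simp add: B_def)
    qed (use e' QQ_nonneg in auto)
    also have "\<dots> < e"
    proof -
      have a: "B * e' = e / 4" using B by (simp add: e'_def)
      have q: "QQ n x \<ge> 0" by (rule QQ_nonneg)
      have "exp (- \<alpha> * real j) * B * QQ n x \<le> exp (- \<alpha> * real j) * B * (QQ n x + 1)"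
        using B by (intro mult_left_mono) auto
      also have "\<dots> < e / (4 * B * (QQ n x + 1)) * B * (QQ n x + 1)"
        using ej B q by (intro mult_strict_right_mono) auto
      also have "\<dots> = e / 4"
      proof -
        have nz: "4 * B * (QQ n x + 1) \<noteq> 0" using q B by auto
        have "e / (4 * B * (QQ n x + 1)) * B * (QQ n x + 1) = e / (4 * B * (QQ n x + 1)) * (4 * B * (QQ n x + 1)) / 4"
          by (simp add: mult_ac)
        also have "\<dots> = e / 4" using nz by simp
        finally show ?thesis .
      qed
      finally show ?thesis using a e by linarith
    qed
    finally show ?thesis .
  qed
  show "\<exists>N. \<forall>k\<ge>N. \<forall>j\<ge>N. P n (S k x - S j x) < e"
  proof (intro exI[of _ N0] allI impI)
    fix k j assume k: "N0 \<le> k" and j: "N0 \<le> j"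
    show "P n (S k x - S j x) < e"
    proof (cases "j \<le> k")
      case True then show ?thesis using key j by simp
    next
      case False
      then have "P n (S j x - S k x) < e" using key k by simp
      then show ?thesis using sn_commute[OF p] by simp
    qed
  qed
qed

definition R :: "'a \<Rightarrow> 'a" where
  "R x = (SOME y. limitin (seminorm_topology P) (\<lambda>N. S N x) y sequentially)"

lemma R_lim: "limitin (seminorm_topology P) (\<lambda>N. S N x) (R x) sequentially"
proof -
  have "\<exists>y. limitin (seminorm_topology P) (\<lambda>N. S N x) y sequentially"
  proof -
    have "\<forall>f. (\<forall>n e. 0 < e \<longrightarrow> (\<exists>N. \<forall>k\<ge>N. \<forall>j\<ge>N. P n (f k - f j) < e)) \<longrightarrow>
            (\<exists>y. limitin (seminorm_topology P) f y sequentially)" using fr unfolding frechet_def by blast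
    then have "(\<forall>n e. 0 < e \<longrightarrow> (\<exists>N. \<forall>k\<ge>N. \<forall>j\<ge>N. P n (S k x - S j x) < e)) \<longrightarrow>
            (\<exists>y. limitin (seminorm_topology P) (\<lambda>N. S N x) y sequentially)" by (rule spec)
    then show ?thesis using S_cauchy[of x] by (rule mp)
  qed
  then show ?thesis unfolding R_def by (rule someI_ex)
qed

lemma R_plus: "R (x + y) = R x + R y"
proof -
  have "limitin (seminorm_topology P) (\<lambda>N. S N (x + y)) (R x + R y) sequentially"
    unfolding S_plus by (rule lim_add[OF SN R_lim R_lim])
  then show ?thesis using lim_unique[OF fr R_lim] by simp
qed

lemma R_diff: "R (x - y) = R x - R y"
proof -
  have "limitin (seminorm_topology P) (\<lambda>N. S N (x - y)) (R x - R y) sequentially"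
    unfolding S_diff by (rule lim_diff[OF SN R_lim R_lim])
  then show ?thesis using lim_unique[OF fr R_lim] by simp
qed

lemma R_scale: "R (c *\<^sub>C x) = c *\<^sub>C R x"
proof -
  have "limitin (seminorm_topology P) (\<lambda>N. S N (c *\<^sub>C x)) (c *\<^sub>C R x) sequentially"
    unfolding S_scale by (rule lim_scale[OF SN R_lim])
  then show ?thesis using lim_unique[OF fr R_lim] by simp
qed

lemma R_lin: "clinear_map R"
  by (simp add: clinear_map_def R_plus R_scale)

lemma R_T: "s \<ge> 0 \<Longrightarrow> R (T s x) = T s (R x)"
proof -
  assume s: "s \<ge> 0"
  have "limitin (seminorm_topology P) (\<lambda>N. T s (S N x)) (T s (R x)) sequentially"
    by (rule lim_ops[OF SN T_ops[OF s] R_lim])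
  then have "limitin (seminorm_topology P) (\<lambda>N. S N (T s x)) (T s (R x)) sequentially"
    by (simp add: S_T[OF s])
  then show ?thesis using lim_unique[OF fr R_lim] by simp
qed

lemma QQ_R: "QQ n (R x) \<le> QQ n x / \<alpha>"
proof (rule field_le_epsilon)
  fix e :: real assume e: "e > 0"
  have "eventually (\<lambda>N. QQ n (S N x - R x) < e / 2) sequentially"
    using e by (intro lim_QQ[OF R_lim]) simp
  moreover have "eventually (\<lambda>N. dl N < e / (2 * (QQ n x + 1))) sequentially"
    using e QQ_nonneg[of n x] by (intro ev_dl_small) (simp add: add_nonneg_pos)
  ultimately have "eventually (\<lambda>N. QQ n (S N x - R x) < e / 2 \<and> dl N < e / (2 * (QQ n x + 1))) sequentially"
    by (rule eventually_conj)
  then obtain N where N: "QQ n (S N x - R x) < e / 2" "dl N < e / (2 * (QQ n x + 1))"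
    using eventually_happens[of _ sequentially] by auto
  have "QQ n (- (S N x - R x) + S N x) \<le> QQ n (- (S N x - R x)) + QQ n (S N x)" by (rule QQ_add)
  then have "QQ n (R x) \<le> QQ n (- (S N x - R x)) + QQ n (S N x)" by simp
  also have "\<dots> \<le> QQ n (S N x - R x) + (dl N + 1 / \<alpha>) * QQ n x"
    using QQ_minus S_bound by (rule add_mono)
  also have "\<dots> \<le> e / 2 + (e / (2 * (QQ n x + 1)) * QQ n x + QQ n x / \<alpha>)"
  proof -
    have "dl N * QQ n x \<le> e / (2 * (QQ n x + 1)) * QQ n x"
      using N(2) QQ_nonneg[of n x] by (intro mult_right_mono) auto
    then show ?thesis using N(1) by (simp add: distrib_right)
  qed
  also have "\<dots> \<le> QQ n x / \<alpha> + e"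
  proof -
    have "e / (2 * (QQ n x + 1)) * QQ n x = e / 2 * (QQ n x / (QQ n x + 1))"
      using QQ_nonneg[of n x] by (simp add: field_simps)
    also have "\<dots> \<le> e / 2" using e QQ_nonneg[of n x] by (simp add: mult_left_le divide_le_eq)
    finally show ?thesis by linarith
  qed
  finally show "QQ n (R x) \<le> QQ n x / \<alpha> + e" .
qed

lemma R_ops: "R \<in> cont_ops P"
proof (rule bound_ops[OF SN R_lin], intro allI)
  fix n
  obtain m C where C: "C \<ge> 0" "\<forall>x. QQ n x \<le> C * Qs P m x" using QQ_bound by blast
  have "\<forall>x. P n (R x) \<le> (C / \<alpha>) * Qs P m x"
  proof
    fix x
    have "P n (R x) \<le> QQ n (R x)" by (rule QQ_ge)
    also have "\<dots> \<le> QQ n x / \<alpha>" by (rule QQ_R)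
    also have "\<dots> \<le> C * Qs P m x / \<alpha>" using C \<alpha>_pos by (simp add: divide_right_mono)
    finally show "P n (R x) \<le> (C / \<alpha>) * Qs P m x" by simp
  qed
  then show "\<exists>m c. c \<ge> 0 \<and> (\<forall>x. P n (R x) \<le> c * Qs P m x)" using C \<alpha>_pos by (intro exI[of _ m] exI[of _ "C / \<alpha>"]) simp
qed

end

context sgp begin

lemma QQ_4: "QQ n (a + b - c + d) \<le> QQ n a + QQ n b + QQ n c + QQ n d"
proof -
  have "QQ n (a + b - c + d) \<le> QQ n (a + b - c) + QQ n d" by (rule QQ_add)
  also have "QQ n (a + b - c) \<le> QQ n (a + b) + QQ n c" by (rule QQ_diff)
  also have "QQ n (a + b) \<le> QQ n a + QQ n b" by (rule QQ_add)
  finally show ?thesis by simp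
qed

lemma shift_N:
  assumes h: "h > 0" and E: "\<forall>t. 0 \<le> t \<and> t \<le> h \<longrightarrow> QQ n (g t x - x) \<le> E"
    and j_def: "j = nat \<lfloor>h / dl N\<rfloor>" and r_def: "r = h - real j * dl N"
  shows "0 \<le> r" "r < dl N"
    "QQ n (exp (- (l * complex_of_real h)) *\<^sub>C T h (S N x) - S N x + complex_of_real h *\<^sub>C x)
     \<le> h * E + (dl N + 1 / \<alpha>) * QQ n (g r x - x) + exp (- \<alpha> * real N) * (dl N + 1 / \<alpha>) * QQ n x
        + dl N * QQ n x"
proof -
  define \<delta> where "\<delta> = dl N"
  define K where "K = KK N"
  have \<delta>: "\<delta> > 0" using dl_pos by (simp add: \<delta>_def)
  have fl0: "0 \<le> \<lfloor>h / \<delta>\<rfloor>" using h \<delta> by simp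
  have rj: "real j = real_of_int \<lfloor>h / \<delta>\<rfloor>" using fl0 by (simp add: j_def \<delta>_def)
  have j1: "real j \<le> h / \<delta>" using rj by simp
  have j2: "h / \<delta> < real j + 1" using rj by linarith
  have jh: "real j * \<delta> \<le> h" using j1 \<delta> by (simp add: pos_le_divide_eq)
  have hj: "h < (real j + 1) * \<delta>" using j2 \<delta> by (simp add: pos_divide_less_eq)
  show r0: "0 \<le> r" using jh by (simp add: r_def \<delta>_def)
  show r1: "r < dl N" using hj by (simp add: r_def \<delta>_def algebra_simps)
  have E0: "E \<ge> 0" using E[rule_format, of 0] h by (simp add: g0 QQ_zero)
  define c' where "c' = exp (- (l * complex_of_real h))"
  define a where "a = (\<lambda>k::nat. complex_of_real \<delta> *\<^sub>C g (real k * \<delta> + r) x)"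
  define b where "b = (\<lambda>k::nat. complex_of_real \<delta> *\<^sub>C g (real k * \<delta>) x)"
  have Sb: "S N x = sum b {..<K}" by (simp add: S_def b_def K_def \<delta>_def)
  have TS: "c' *\<^sub>C T h (S N x) = sum (\<lambda>k. a (k + j)) {..<K}"
  proof -
    have "c' *\<^sub>C T h (S N x) = (\<Sum>k<K. c' *\<^sub>C T h (b k))"
      unfolding Sb using h by (simp add: clinear_sum[OF T_lin] scaleC_sum_right)
    also have "\<dots> = sum (\<lambda>k. a (k + j)) {..<K}"
    proof (rule sum.cong[OF refl])
      fix k
      have k0: "real k * \<delta> \<ge> 0" using \<delta> by simp
      have arg: "real (k + j) * \<delta> + r = h + real k * \<delta>" by (simp add: r_def \<delta>_def algebra_simps)
      have "c' *\<^sub>C T h (b k) = complex_of_real \<delta> *\<^sub>C (c' *\<^sub>C T h (g (real k * \<delta>) x))"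
        using h by (simp add: b_def clinear_scale[OF T_lin] scaleC_comm)
      also have "\<dots> = complex_of_real \<delta> *\<^sub>C g (h + real k * \<delta>) x"
        using g_add[of h "real k * \<delta>" x] h k0 by (simp add: c'_def)
      also have "\<dots> = a (k + j)" by (simp only: a_def arg)
      finally show "c' *\<^sub>C T h (b k) = a (k + j)" .
    qed
    finally show ?thesis .
  qed
  have sh: "sum (\<lambda>k. a (k + j)) {..<K} = sum a {j..<K + j}"
    using sum.shift_bounds_nat_ivl[of a 0 j K] by (simp add: atLeast0LessThan)
  have c1: "sum a {..<K + j} = sum a {..<j} + sum a {j..<K + j}"
    unfolding atLeast0LessThan[symmetric] by (rule sum.atLeastLessThan_concat[symmetric]) auto
  have c2: "sum b {..<K + j} = sum b {..<K} + sum b {K..<K + j}"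
    unfolding atLeast0LessThan[symmetric] by (rule sum.atLeastLessThan_concat[symmetric]) auto
  have hx: "complex_of_real h *\<^sub>C x = (\<Sum>k<j. complex_of_real \<delta> *\<^sub>C x) + complex_of_real r *\<^sub>C x"
  proof -
    have "(\<Sum>k<j. complex_of_real \<delta> *\<^sub>C x) = (\<Sum>k<j. complex_of_real \<delta>) *\<^sub>C x"
      by (rule scaleC_sum_left[symmetric])
    also have "(\<Sum>k<j. complex_of_real \<delta>) = complex_of_real (real j * \<delta>)" by simp
    finally have "(\<Sum>k<j. complex_of_real \<delta> *\<^sub>C x) + complex_of_real r *\<^sub>C x
        = (complex_of_real (real j * \<delta>) + complex_of_real r) *\<^sub>C x" by (simp add: scaleC_add_left)
    also have "complex_of_real (real j * \<delta>) + complex_of_real r = complex_of_real h"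
      by (simp add: r_def \<delta>_def flip: of_real_add)
    finally show ?thesis by simp
  qed
  have Zeq: "c' *\<^sub>C T h (S N x) - S N x + complex_of_real h *\<^sub>C x
      = (sum a {..<K + j} - sum b {..<K + j}) + sum b {K..<K + j}
        - (sum a {..<j} - (\<Sum>k<j. complex_of_real \<delta> *\<^sub>C x)) + complex_of_real r *\<^sub>C x"
    unfolding TS sh hx by (simp add: Sb c1 c2 algebra_simps)
  have A: "QQ n (sum a {..<K + j} - sum b {..<K + j}) \<le> (dl N + 1 / \<alpha>) * QQ n (g r x - x)"
  proof -
    have "QQ n (sum a {..<K + j} - sum b {..<K + j}) = QQ n (\<Sum>k<K + j. a k - b k)"
      by (simp add: sum_subtractf)
    also have "\<dots> \<le> (\<Sum>k<K + j. QQ n (a k - b k))" by (rule QQ_sum)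
    also have "\<dots> \<le> (\<Sum>k<K + j. \<delta> * exp (- \<alpha> * (real k * \<delta>)) * QQ n (g r x - x))"
    proof (rule sum_mono)
      fix k
      have k0: "real k * \<delta> \<ge> 0" using \<delta> by simp
      have "a k - b k = complex_of_real \<delta> *\<^sub>C (exp (- (l * complex_of_real (real k * \<delta>))) *\<^sub>C T (real k * \<delta>) (g r x - x))"
        unfolding a_def b_def g_add[OF k0 r0]
        by (simp add: g_def[of "real k * \<delta>"] scaleC_diff_right clinear_diff[OF T_lin[OF k0]])
      also have "QQ n \<dots> \<le> \<delta> * exp (- \<alpha> * (real k * \<delta>)) * QQ n (g r x - x)"
        using k0 \<delta> by (intro QQ_term) auto
      finally show "QQ n (a k - b k) \<le> \<delta> * exp (- \<alpha> * (real k * \<delta>)) * QQ n (g r x - x)" .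
    qed
    also have "\<dots> = (\<Sum>k<K + j. \<delta> * exp (- \<alpha> * (real k * \<delta>))) * QQ n (g r x - x)"
      by (simp add: sum_distrib_right)
    also have "\<dots> \<le> (dl N + 1 / \<alpha>) * QQ n (g r x - x)"
      using geo[OF \<delta> \<alpha>_pos, where i=0 and j="K + j"] QQ_nonneg
      by (intro mult_right_mono) (simp_all add: atLeast0LessThan \<delta>_def)
    finally show ?thesis .
  qed
  have B: "QQ n (sum b {K..<K + j}) \<le> exp (- \<alpha> * real N) * (dl N + 1 / \<alpha>) * QQ n x"
    using QQ_tail[where i=K and j="K + j" and N=N and x=x and n=n] KK_dl[of N]
    by (simp add: b_def K_def \<delta>_def)
  have C: "QQ n (sum a {..<j} - (\<Sum>k<j. complex_of_real \<delta> *\<^sub>C x)) \<le> h * E"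
  proof -
    have "QQ n (sum a {..<j} - (\<Sum>k<j. complex_of_real \<delta> *\<^sub>C x)) = QQ n (\<Sum>k<j. complex_of_real \<delta> *\<^sub>C (g (real k * \<delta> + r) x - x))"
      by (simp add: a_def sum_subtractf scaleC_diff_right)
    also have "\<dots> \<le> (\<Sum>k<j. QQ n (complex_of_real \<delta> *\<^sub>C (g (real k * \<delta> + r) x - x)))" by (rule QQ_sum)
    also have "\<dots> \<le> (\<Sum>k<j. \<delta> * E)"
    proof (rule sum_mono)
      fix k assume k: "k \<in> {..<j}"
      have "real k * \<delta> + \<delta> \<le> real j * \<delta>"
      proof -
        have "real k + 1 \<le> real j" using k by simp
        then have "(real k + 1) * \<delta> \<le> real j * \<delta>" using \<delta> by (intro mult_right_mono) auto
        then show ?thesis by (simp add: algebra_simps)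
      qed
      then have t1: "real k * \<delta> + r \<le> h" using \<delta> unfolding r_def \<delta>_def by linarith
      have t0: "0 \<le> real k * \<delta> + r" using \<delta> r0 by simp
      have "QQ n (complex_of_real \<delta> *\<^sub>C (g (real k * \<delta> + r) x - x)) \<le> cmod (complex_of_real \<delta>) * QQ n (g (real k * \<delta> + r) x - x)"
        by (rule QQ_scale)
      also have "\<dots> \<le> \<delta> * E" using E t0 t1 \<delta> by (simp add: mult_left_mono)
      finally show "QQ n (complex_of_real \<delta> *\<^sub>C (g (real k * \<delta> + r) x - x)) \<le> \<delta> * E" .
    qed
    also have "\<dots> = real j * \<delta> * E" by simp
    also have "\<dots> \<le> h * E" using jh E0 by (intro mult_right_mono)
    finally show ?thesis .
  qed
  have D: "QQ n (complex_of_real r *\<^sub>C x) \<le> dl N * QQ n x"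
  proof -
    have "QQ n (complex_of_real r *\<^sub>C x) \<le> cmod (complex_of_real r) * QQ n x" by (rule QQ_scale)
    also have "\<dots> \<le> dl N * QQ n x" using r0 r1 QQ_nonneg by (simp add: mult_right_mono)
    finally show ?thesis .
  qed
  show "QQ n (exp (- (l * complex_of_real h)) *\<^sub>C T h (S N x) - S N x + complex_of_real h *\<^sub>C x)
     \<le> h * E + (dl N + 1 / \<alpha>) * QQ n (g r x - x) + exp (- \<alpha> * real N) * (dl N + 1 / \<alpha>) * QQ n x
        + dl N * QQ n x"
    using QQ_4[of n "sum a {..<K + j} - sum b {..<K + j}" "sum b {K..<K + j}"
        "sum a {..<j} - (\<Sum>k<j. complex_of_real \<delta> *\<^sub>C x)" "complex_of_real r *\<^sub>C x"] A B C D
    unfolding Zeq[unfolded c'_def] by linarith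
qed

end

lemma small_prod: fixes q B c e :: real
  assumes q: "0 \<le> q" and B: "0 < B" and c: "0 \<le> c" and ce: "c < e / (B * (q + 1))"
  shows "c * B * q \<le> e"
proof -
  have "c * B * q \<le> c * B * (q + 1)" using c B by (intro mult_left_mono) auto
  also have "\<dots> \<le> e / (B * (q + 1)) * B * (q + 1)" using ce B q
    by (intro mult_right_mono) auto
  also have "\<dots> = e / (B * (q + 1)) * (B * (q + 1))" by (simp add: mult.assoc)
  also have "\<dots> = e" using B q by simp
  finally show ?thesis .
qed

context sgp begin

lemma shift_est:
  assumes h: "h > 0" and E: "\<forall>t. 0 \<le> t \<and> t \<le> h \<longrightarrow> QQ n (g t x - x) \<le> E"
  shows "QQ n (exp (- (l * complex_of_real h)) *\<^sub>C T h (R x) - R x + complex_of_real h *\<^sub>C x) \<le> h * E"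
proof (rule field_le_epsilon)
  fix e :: real assume e: "e > 0"
  define Z where "Z = (\<lambda>N. exp (- (l * complex_of_real h)) *\<^sub>C T h (S N x) - S N x + complex_of_real h *\<^sub>C x)"
  define Zi where "Zi = exp (- (l * complex_of_real h)) *\<^sub>C T h (R x) - R x + complex_of_real h *\<^sub>C x"
  have lim: "limitin (seminorm_topology P) Z Zi sequentially"
    unfolding Z_def Zi_def
    by (intro lim_add[OF SN] lim_diff[OF SN] lim_scale[OF SN] lim_ops[OF SN T_ops] R_lim lim_const[OF SN])
      (use h in simp)
  define B where "B = 1 + 1 / \<alpha>"
  have B: "B > 0" using \<alpha>_pos by (simp add: B_def add_pos_pos)
  have q: "QQ n x \<ge> 0" by (rule QQ_nonneg)
  have e4: "e / 4 > 0" using e by simp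
  obtain d where d: "d > 0" "\<forall>t. 0 \<le> t \<and> t \<le> d \<longrightarrow> QQ n (g t x - x) \<le> e / 4 / B"
    using g_small[of "e / 4 / B" n x] e B by auto
  have "eventually (\<lambda>N. QQ n (Z N - Zi) < e / 4) sequentially" by (rule lim_QQ[OF lim e4])
  moreover have "eventually (\<lambda>N. dl N < d) sequentially" by (rule ev_dl_small[OF d(1)])
  moreover have "eventually (\<lambda>N. dl N < e / 4 / (1 * (QQ n x + 1))) sequentially"
    using e q by (intro ev_dl_small) simp
  moreover have "eventually (\<lambda>N. exp (- \<alpha> * real N) < e / 4 / (B * (QQ n x + 1))) sequentially"
    using e q B \<alpha>_pos by (intro ev_exp_small) simp_all
  ultimately have "eventually (\<lambda>N. QQ n (Z N - Zi) < e / 4 \<and> dl N < d \<and> dl N < e / 4 / (1 * (QQ n x + 1))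
      \<and> exp (- \<alpha> * real N) < e / 4 / (B * (QQ n x + 1))) sequentially"
    by (simp add: eventually_conj_iff)
  then obtain N where N: "QQ n (Z N - Zi) < e / 4" "dl N < d" "dl N < e / 4 / (1 * (QQ n x + 1))"
    "exp (- \<alpha> * real N) < e / 4 / (B * (QQ n x + 1))"
    using eventually_happens[of _ sequentially] by auto
  define j where "j = nat \<lfloor>h / dl N\<rfloor>"
  define r where "r = h - real j * dl N"
  note sN = shift_N[OF h E j_def r_def]
  have gr: "QQ n (g r x - x) \<le> e / 4 / B" using d sN(1,2) N(2) by auto
  have dB: "dl N + 1 / \<alpha> \<le> B" using dl_le1[of N] by (simp add: B_def)
  have t2: "(dl N + 1 / \<alpha>) * QQ n (g r x - x) \<le> e / 4"
  proof -
    have "(dl N + 1 / \<alpha>) * QQ n (g r x - x) \<le> B * (e / 4 / B)"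
      using dB gr QQ_nonneg B by (intro mult_mono) auto
    also have "\<dots> = e / 4" using B by simp
    finally show ?thesis .
  qed
  have t3: "exp (- \<alpha> * real N) * (dl N + 1 / \<alpha>) * QQ n x \<le> e / 4"
  proof -
    have "exp (- \<alpha> * real N) * (dl N + 1 / \<alpha>) * QQ n x \<le> exp (- \<alpha> * real N) * B * QQ n x"
      using dB q by (intro mult_right_mono mult_left_mono) auto
    also have "\<dots> \<le> e / 4" by (rule small_prod[OF q B _ N(4)]) simp
    finally show ?thesis .
  qed
  have t4: "dl N * QQ n x \<le> e / 4"
    using small_prod[OF q _ _ N(3)] dl_pos[of N] by (simp add: less_imp_le)
  have "QQ n Zi \<le> QQ n (- (Z N - Zi)) + QQ n (Z N)"
  proof -
    have "QQ n (- (Z N - Zi) + Z N) \<le> QQ n (- (Z N - Zi)) + QQ n (Z N)" by (rule QQ_add)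
    then show ?thesis by simp
  qed
  also have "\<dots> \<le> QQ n (Z N - Zi) + QQ n (Z N)" using QQ_minus by (rule add_right_mono)
  also have "QQ n (Z N) \<le> h * E + (dl N + 1 / \<alpha>) * QQ n (g r x - x) + exp (- \<alpha> * real N) * (dl N + 1 / \<alpha>) * QQ n x
        + dl N * QQ n x" using sN(3) by (simp add: Z_def)
  finally show "QQ n Zi \<le> h * E + e" unfolding Zi_def[symmetric] using N(1) t2 t3 t4 by linarith
qed

end

lemma fl_of_real: "filterlim complex_of_real (at 0) (at_right (0::real))"
  unfolding filterlim_at
proof
  show "\<forall>\<^sub>F x in at_right 0. complex_of_real x \<in> UNIV \<and> complex_of_real x \<noteq> 0"
    using eventually_at_right_less[of "0::real"] by (rule eventually_mono) simp
  have "((\<lambda>x::real. complex_of_real x) \<longlongrightarrow> complex_of_real 0) (at_right 0)"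
    by (intro tendsto_of_real tendsto_ident_at)
  then show "(complex_of_real \<longlongrightarrow> 0) (at_right 0)" by simp
qed

lemma exp_lim1: "((\<lambda>h::real. exp (l * complex_of_real h)) \<longlongrightarrow> 1) (at_right 0)"
proof -
  have "((\<lambda>h::real. exp (l * complex_of_real h)) \<longlongrightarrow> exp (l * complex_of_real 0)) (at_right 0)"
    by (intro tendsto_intros)
  then show ?thesis by simp
qed

lemma exp_lim2: "((\<lambda>h::real. (exp (l * complex_of_real h) - 1) / complex_of_real h) \<longlongrightarrow> l) (at_right 0)"
proof -
  have "DERIV (\<lambda>z. exp (l * z)) 0 :> l" by (auto intro!: derivative_eq_intros)
  then have "((\<lambda>z. (exp (l * (0 + z)) - exp (l * 0)) / z) \<longlongrightarrow> l) (at 0)" by (rule DERIV_D)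
  then have D: "((\<lambda>z. (exp (l * z) - 1) / z) \<longlongrightarrow> l) (at 0)" by simp
  show ?thesis using filterlim_compose[OF D fl_of_real] by simp
qed

context sgp begin

lemma gen_lim:
  "limitin (seminorm_topology P) (\<lambda>h. complex_of_real (1 / h) *\<^sub>C (T h (R x) - R x)) (l *\<^sub>C R x - x) (at_right 0)"
  unfolding limitin_sem[OF SN]
proof (intro allI impI)
  fix n and e :: real assume e: "e > 0"
  define y where "y = R x"
  have e8: "e / 8 > 0" using e by simp
  obtain d where d: "d > 0" "\<forall>t. 0 \<le> t \<and> t \<le> d \<longrightarrow> QQ n (g t x - x) \<le> e / 8"
    using g_small[OF e8] by blast
  have qx: "QQ n x \<ge> 0" and qy: "QQ n y \<ge> 0" by (rule QQ_nonneg)+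
  have ev1: "eventually (\<lambda>h. h \<in> {0<..<d}) (at_right (0::real))" by (rule eventually_at_right_real[OF d(1)])
  have ev2: "eventually (\<lambda>h. cmod (exp (l * complex_of_real h) - 1) < min 1 (e / 4 / (1 * (QQ n x + 1)))) (at_right (0::real))"
  proof -
    have "min 1 (e / 4 / (1 * (QQ n x + 1))) > 0" using e qx by simp
    then show ?thesis using exp_lim1 unfolding tendsto_iff dist_norm by blast
  qed
  have ev3: "eventually (\<lambda>h. cmod ((exp (l * complex_of_real h) - 1) / complex_of_real h - l) < e / 4 / (1 * (QQ n y + 1))) (at_right (0::real))"
  proof -
    have "e / 4 / (1 * (QQ n y + 1)) > 0" using e qy by simp
    then show ?thesis using exp_lim2 unfolding tendsto_iff dist_norm by blast
  qed
  have "eventually (\<lambda>h. h \<in> {0<..<d} \<and> cmod (exp (l * complex_of_real h) - 1) < min 1 (e / 4 / (1 * (QQ n x + 1)))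
      \<and> cmod ((exp (l * complex_of_real h) - 1) / complex_of_real h - l) < e / 4 / (1 * (QQ n y + 1))) (at_right (0::real))"
    using ev1 ev2 ev3 by (simp add: eventually_conj_iff)
  then show "eventually (\<lambda>h. P n (complex_of_real (1 / h) *\<^sub>C (T h (R x) - R x) - (l *\<^sub>C R x - x)) < e) (at_right 0)"
  proof (rule eventually_mono)
    fix h :: real
    assume H: "h \<in> {0<..<d} \<and> cmod (exp (l * complex_of_real h) - 1) < min 1 (e / 4 / (1 * (QQ n x + 1)))
      \<and> cmod ((exp (l * complex_of_real h) - 1) / complex_of_real h - l) < e / 4 / (1 * (QQ n y + 1))"
    then have h: "h > 0" "h < d" by auto
    define c where "c = exp (l * complex_of_real h)"
    define c' where "c' = exp (- (l * complex_of_real h))"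
    define ih where "ih = complex_of_real (1 / h)"
    define hh where "hh = complex_of_real h"
    define Z where "Z = c' *\<^sub>C T h y - y + hh *\<^sub>C x"
    have cc: "c * c' = 1" by (simp add: c_def c'_def exp_minus field_simps)
    have ihc: "ih * (c * hh) = c" using h by (simp add: ih_def hh_def)
    have ihc2: "c * (hh * ih) = c" using h by (simp add: ih_def hh_def)
    have ihd: "ih * (c - 1) = (c - 1) / hh" by (simp add: ih_def hh_def divide_inverse mult.commute)
    have TZ: "T h y = c *\<^sub>C Z + c *\<^sub>C y - (c * hh) *\<^sub>C x"
      by (simp add: Z_def scaleC_add_right scaleC_diff_right scaleC_scaleC cc scaleC_one)
    have eq: "ih *\<^sub>C (T h y - y) - (l *\<^sub>C y - x) = (ih * c) *\<^sub>C Z + (ih * (c - 1) - l) *\<^sub>C y + (1 - c) *\<^sub>C x"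
      unfolding TZ
      by (simp add: scaleC_add_right scaleC_diff_right scaleC_scaleC ihc ihc2 scaleC_add_left scaleC_diff_left
          scaleC_one algebra_simps)
    have QZ: "QQ n Z \<le> h * (e / 8)"
      unfolding Z_def c'_def hh_def y_def using shift_est[OF h(1), of n x "e / 8"] d h by auto
    have c2: "cmod c \<le> 2"
    proof -
      have "cmod c = cmod ((c - 1) + 1)" by simp
      also have "\<dots> \<le> cmod (c - 1) + 1" using norm_triangle_ineq[of "c - 1" 1] by simp
      finally show ?thesis using H by (simp add: c_def)
    qed
    have "P n (ih *\<^sub>C (T h y - y) - (l *\<^sub>C y - x)) \<le> QQ n (ih *\<^sub>C (T h y - y) - (l *\<^sub>C y - x))" by (rule QQ_ge)
    also have "\<dots> \<le> QQ n ((ih * c) *\<^sub>C Z) + QQ n ((ih * (c - 1) - l) *\<^sub>C y) + QQ n ((1 - c) *\<^sub>C x)"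
      unfolding eq by (rule order_trans[OF QQ_add add_right_mono[OF QQ_add]])
    also have "\<dots> \<le> cmod (ih * c) * QQ n Z + cmod (ih * (c - 1) - l) * QQ n y + cmod (1 - c) * QQ n x"
      by (intro add_mono QQ_scale)
    also have "\<dots> \<le> e / 4 + e / 4 + e / 4"
    proof (intro add_mono)
      have "cmod (ih * c) * QQ n Z = cmod c / h * QQ n Z" using h by (simp add: ih_def norm_mult norm_divide)
      also have "\<dots> \<le> cmod c / h * (h * (e / 8))" using QZ h by (intro mult_left_mono) auto
      also have "\<dots> = cmod c * (e / 8)" using h by simp
      also have "\<dots> \<le> 2 * (e / 8)" using c2 e by (intro mult_right_mono) auto
      finally show "cmod (ih * c) * QQ n Z \<le> e / 4" by simp
      have "cmod (ih * (c - 1) - l) < e / 4 / (1 * (QQ n y + 1))"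
        unfolding ihd unfolding c_def hh_def using H by blast
      then show "cmod (ih * (c - 1) - l) * QQ n y \<le> e / 4"
        using small_prod[OF qy _ _, of 1 "cmod (ih * (c - 1) - l)" "e / 4"] by simp
      have "cmod (1 - c) = cmod (c - 1)" by (rule norm_minus_commute)
      then show "cmod (1 - c) * QQ n x \<le> e / 4"
        using small_prod[OF qx _ _, of 1 "cmod (1 - c)" "e / 4"] H by (simp add: c_def)
    qed
    also have "\<dots> < e" using e by simp
    finally show "P n (complex_of_real (1 / h) *\<^sub>C (T h (R x) - R x) - (l *\<^sub>C R x - x)) < e"
      by (simp add: ih_def y_def)
  qed
qed

end

lemma at_right_nb: "at_right (0::real) \<noteq> bot"
  using trivial_limit_at_right_real[of "0::real"] unfolding trivial_limit_def .

context sgp begin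

lemma QQ_Rpow: "QQ k ((R ^^ n) x) \<le> QQ k x / \<alpha> ^ n"
proof (induction n)
  case 0 then show ?case by simp
next
  case (Suc n)
  have "QQ k ((R ^^ Suc n) x) = QQ k (R ((R ^^ n) x))" by simp
  also have "\<dots> \<le> QQ k ((R ^^ n) x) / \<alpha>" by (rule QQ_R)
  also have "\<dots> \<le> QQ k x / \<alpha> ^ n / \<alpha>" using Suc.IH \<alpha>_pos by (intro divide_right_mono) auto
  also have "\<dots> = QQ k x / \<alpha> ^ Suc n" by (simp add: divide_divide_eq_left mult.commute)
  finally show ?case .
qed

lemma QQs_bound: "\<exists>M C. C \<ge> 0 \<and> (\<forall>x. (\<Sum>k\<le>m. QQ k x) \<le> C * Qs P M x)"
proof (induction m)
  case 0 then show ?case using QQ_bound[of 0] by simp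
next
  case (Suc m)
  obtain M1 C1 where 1: "C1 \<ge> 0" "\<forall>x. (\<Sum>k\<le>m. QQ k x) \<le> C1 * Qs P M1 x" using Suc by blast
  obtain M2 C2 where 2: "C2 \<ge> 0" "\<forall>x. QQ (Suc m) x \<le> C2 * Qs P M2 x" using QQ_bound by blast
  have "\<forall>x. (\<Sum>k\<le>Suc m. QQ k x) \<le> (C1 + C2) * Qs P (max M1 M2) x"
  proof
    fix x
    have "(\<Sum>k\<le>Suc m. QQ k x) = (\<Sum>k\<le>m. QQ k x) + QQ (Suc m) x" by simp
    also have "\<dots> \<le> C1 * Qs P M1 x + C2 * Qs P M2 x" using 1 2 by (simp add: add_mono)
    also have "\<dots> \<le> C1 * Qs P (max M1 M2) x + C2 * Qs P (max M1 M2) x"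
      using 1 2 Qs_mono[OF SN, of M1 "max M1 M2" x] Qs_mono[OF SN, of M2 "max M1 M2" x]
      by (simp add: add_mono mult_left_mono)
    finally show "(\<Sum>k\<le>Suc m. QQ k x) \<le> (C1 + C2) * Qs P (max M1 M2) x" by (simp add: distrib_right)
  qed
  then show ?case using 1 2 by (intro exI[of _ "max M1 M2"] exI[of _ "C1 + C2"]) simp
qed

definition Bp :: "nat \<Rightarrow> 'a \<Rightarrow> 'a" where
  "Bp n x = (complex_of_real \<alpha> ^ n) *\<^sub>C (R ^^ n) x"

lemma QQ_Bp: "QQ k (Bp n x) \<le> QQ k x"
proof -
  have "QQ k (Bp n x) \<le> cmod (complex_of_real \<alpha> ^ n) * QQ k ((R ^^ n) x)"
    unfolding Bp_def by (rule QQ_scale)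
  also have "cmod (complex_of_real \<alpha> ^ n) = \<alpha> ^ n" using \<alpha>_pos by (simp add: norm_power)
  also have "\<alpha> ^ n * QQ k ((R ^^ n) x) \<le> \<alpha> ^ n * (QQ k x / \<alpha> ^ n)"
    by (rule mult_left_mono[OF QQ_Rpow]) (use \<alpha>_pos in simp)
  also have "\<dots> = QQ k x" using \<alpha>_pos by simp
  finally show ?thesis .
qed

lemma Bp_lin: "clinear_map (Bp n)"
proof -
  have L: "clinear_map (R ^^ n)" by (rule clinear_pow[OF R_lin])
  show ?thesis unfolding clinear_map_def Bp_def
    by (simp add: clinear_add[OF L] clinear_scale[OF L] scaleC_add_right scaleC_comm)
qed

lemma Bp_ops: "Bp n \<in> cont_ops P"
proof (rule bound_ops[OF SN Bp_lin], intro allI)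
  fix k
  obtain m C where C: "C \<ge> 0" "\<forall>x. QQ k x \<le> C * Qs P m x" using QQ_bound by blast
  have "\<forall>x. P k (Bp n x) \<le> C * Qs P m x"
    using QQ_ge QQ_Bp C(2) by (meson order_trans)
  then show "\<exists>m c. c \<ge> 0 \<and> (\<forall>x. P k (Bp n x) \<le> c * Qs P m x)" using C by blast
qed

lemma R_L0: "R \<in> L0 P"
  unfolding L0_def
proof (intro CollectI conjI R_ops exI[of _ "complex_of_real \<alpha>"])
  show "complex_of_real \<alpha> \<noteq> 0" using \<alpha>_pos by simp
  have eqr: "range (\<lambda>n. \<lambda>x. complex_of_real \<alpha> ^ n *\<^sub>C (R ^^ n) x) = range Bp"
    by (simp add: Bp_def[abs_def])
  show "equicontinuous P (range (\<lambda>n. \<lambda>x. complex_of_real \<alpha> ^ n *\<^sub>C (R ^^ n) x))"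
    unfolding eqr equicontinuous_def
  proof (intro conjI ballI)
    show "range Bp \<subseteq> cont_ops P" using Bp_ops by blast
    fix q assume q: "q \<in> cont_seminorms P"
    obtain m c where c: "c \<ge> 0" "\<forall>x. q x \<le> c * Qs P m x" using cs_bound[OF SN q] by blast
    obtain M C where C: "C \<ge> 0" "\<forall>x. (\<Sum>k\<le>m. QQ k x) \<le> C * Qs P M x" using QQs_bound by blast
    have "\<forall>B\<in>range Bp. \<forall>x. q (B x) \<le> (c * C) * Qs P M x"
    proof (intro ballI allI)
      fix B x assume "B \<in> range Bp"
      then obtain n where n: "B = Bp n" by blast
      have "q (B x) \<le> c * Qs P m (B x)" using c by simp
      also have "Qs P m (B x) \<le> (\<Sum>k\<le>m. QQ k x)"
        unfolding Qs_def n by (intro sum_mono order_trans[OF QQ_ge QQ_Bp])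
      then have "c * Qs P m (B x) \<le> c * (\<Sum>k\<le>m. QQ k x)" using c by (simp add: mult_left_mono)
      also have "\<dots> \<le> c * (C * Qs P M x)" using C c by (simp add: mult_left_mono)
      finally show "q (B x) \<le> (c * C) * Qs P M x" by (simp add: mult.assoc)
    qed
    then show "\<exists>p\<in>cont_seminorms P. \<exists>C\<ge>0. \<forall>B\<in>range Bp. \<forall>x. q (B x) \<le> C * p x"
      using Qs_cs[OF SN, of M] c C by (intro bexI[of _ "Qs P M"] exI[of _ "c * C"]) auto
  qed
qed

lemma resolvent:
  assumes G: "is_generator P T A D"
  shows "bij_betw (\<lambda>x. l *\<^sub>C x - A x) D UNIV \<and> inv_into D (\<lambda>x. l *\<^sub>C x - A x) \<in> L0 P"
proof -
  have Deq: "D = {x. \<exists>y. limitin (seminorm_topology P)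
                 (\<lambda>h. complex_of_real (1 / h) *\<^sub>C (T h x - x)) y (at_right 0)}"
    and DA: "\<forall>x\<in>D. limitin (seminorm_topology P)
                 (\<lambda>h. complex_of_real (1 / h) *\<^sub>C (T h x - x)) (A x) (at_right 0)"
    using G by (auto simp: is_generator_def)
  have RD: "R x \<in> D" for x
  proof -
    have "R x \<in> {x. \<exists>y. limitin (seminorm_topology P)
                 (\<lambda>h. complex_of_real (1 / h) *\<^sub>C (T h x - x)) y (at_right 0)}"
      using gen_lim[of x] by blast
    then show ?thesis using Deq by simp
  qed
  have AR: "A (R x) = l *\<^sub>C R x - x" for x
    using lim_unique[OF fr DA[rule_format, OF RD] gen_lim at_right_nb] .
  have RA: "R (l *\<^sub>C x - A x) = x" if x: "x \<in> D" for x
  proof -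
    have L: "limitin (seminorm_topology P) (\<lambda>h. R (complex_of_real (1 / h) *\<^sub>C (T h x - x))) (R (A x)) (at_right 0)"
      by (rule lim_ops[OF SN R_ops DA[rule_format, OF x]])
    have ev: "eventually (\<lambda>h. R (complex_of_real (1 / h) *\<^sub>C (T h x - x))
        = complex_of_real (1 / h) *\<^sub>C (T h (R x) - R x)) (at_right (0::real))"
      using eventually_at_right_less[of "0::real"]
      by (rule eventually_mono) (simp add: R_scale R_diff R_T)
    have "limitin (seminorm_topology P) (\<lambda>h. complex_of_real (1 / h) *\<^sub>C (T h (R x) - R x)) (R (A x)) (at_right 0)"
      by (rule limitin_transform_eventually[OF ev L])
    from lim_unique[OF fr this gen_lim at_right_nb] have "R (A x) = l *\<^sub>C R x - x" .
    then show ?thesis by (simp add: R_diff R_scale)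
  qed
  define f where "f = (\<lambda>x. l *\<^sub>C x - A x)"
  have inj: "inj_on f D"
  proof (rule inj_onI)
    fix a b assume a: "a \<in> D" and b: "b \<in> D" and "f a = f b"
    then have "R (f a) = R (f b)" by simp
    then show "a = b" using RA[OF a] RA[OF b] by (simp add: f_def)
  qed
  have fR: "f (R y) = y" for y by (simp add: f_def AR)
  have surj: "f ` D = UNIV"
  proof
    show "UNIV \<subseteq> f ` D"
    proof
      fix y :: 'a show "y \<in> f ` D" by (rule image_eqI[where f=f and x="R y", OF fR[of y, symmetric] RD[of y]])
    qed
  qed simp
  have inv: "inv_into D f = R"
  proof
    fix y
    have "inv_into D f y = inv_into D f (f (R y))" by (simp add: fR)
    also have "\<dots> = R y" by (rule inv_into_f_f[OF inj RD])
    finally show "inv_into D f y = R y" .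
  qed
  show ?thesis using inj surj inv R_L0 by (simp add: bij_betw_def f_def[symmetric])
qed

end

theorem theorem4p1:
  fixes P :: "nat \<Rightarrow> 'a::cvector \<Rightarrow> real"
    and T :: "real \<Rightarrow> 'a \<Rightarrow> 'a"
    and A :: "'a \<Rightarrow> 'a" and D :: "'a set"
  assumes "frechet P"
    and "C0_semigroup P T"
    and "exp_equicont P T"
    and "is_generator P T A D"
  shows "-\<infinity> \<le> spectral_bound P A D \<and> spectral_bound P A D \<le> growth_bound P T
         \<and> growth_bound P T < \<infinity>"
proof (intro conjI)
  note fr = assms(1) and C0 = assms(2) and G = assms(4)
  obtain \<omega>0 where \<omega>0: "exp_equicont_order P T \<omega>0" using assms(3) by (auto simp: exp_equicont_def)
  have "growth_bound P T \<le> ereal \<omega>0" unfolding growth_bound_def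
    by (rule INF_lower) (use \<omega>0 in simp)
  moreover have "ereal \<omega>0 < \<infinity>" by simp
  ultimately show "growth_bound P T < \<infinity>" by (rule le_less_trans)
  show "-\<infinity> \<le> spectral_bound P A D" by simp
  show "spectral_bound P A D \<le> growth_bound P T"
    unfolding spectral_bound_def
  proof (rule SUP_least)
    fix l assume l: "l \<in> {l. Some l \<in> spectrum_op P A D}"
    show "ereal (Re l) \<le> growth_bound P T"
    proof (rule ccontr)
      assume "\<not> ereal (Re l) \<le> growth_bound P T"
      then have "(INF \<omega>\<in>{\<omega>. exp_equicont_order P T \<omega>}. ereal \<omega>) < ereal (Re l)"
        by (simp add: growth_bound_def not_le)
      then obtain \<omega> where \<omega>: "exp_equicont_order P T \<omega>" "ereal \<omega> < ereal (Re l)"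
        by (auto simp: INF_less_iff)
      interpret sgp P T \<omega> l using fr C0 \<omega> by unfold_locales simp_all
      have "Some l \<in> resolvent_set P A D"
        using resolvent[OF G] unfolding resolvent_set_def by blast
      then show False using l by (simp add: spectrum_op_def)
    qed
  qed
qed
end
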